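(* Let $s$ be a degree sequence and let $G,H\in\mathcal{P}(s)$. Then there exists a sequence of p-switches transforming $G$ into $H$; that is, there are 2-switches $\tau_1,\dots,\tau_k$ ($k\ge0$) such that, with $G_0=G$ and $G_i=\tau_i(G_{i-1})$, each $\tau_i$ is a p-switch over $G_{i-1}$ and $G_k=H$.
   Context: All graphs are finite, simple, undirected and labeled, with vertex set $[n]$. The degree sequence of a graph $G$ with $V(G)=[n]$ is $(d_1,\dots,d_n)$ where $d_i$ is the degree of vertex $i$. A pseudoforest is a graph each of whose connected components contains at most one cycle (i.e. each component is a tree or a unicyclic graph, a unicyclic graph being a connected graph with exactly one cycle). $\mathcal{P}(s)$ is the set of pseudoforests with degree sequence $s$. For $a,b,c,d\in[n]$, the matrix $A=\binom{a\ b}{c\ d}$ is interchangeable in $G$ if $ab,cd\in E(G)$, $\{a,b\}\cap\{c,d\}=\varnothing$ and $ac,bd\notin E(G)$. The 2-switch $\tau_A$ sends $G$ to $G-ab-cd+ac+bd$ if $A$ is interchangeable in $G$, and to $G$ otherwise (then $\tau_A$ is trivial for $G$). A nontrivial 2-switch $\tau$ over a pseudoforest $G$ is a p-switch if $\tau(G)$ is a pseudoforest. The empty sequence is allowed. *)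

theory Defs
  imports Main
begin

text \<open>A labeled simple graph on vertex set [n] = {1..n} is represented by its edge set,
  a set of 2-element subsets of {1..n}.\<close>

type_synonym graph = "nat set set"

definition is_graph :: "nat \<Rightarrow> graph \<Rightarrow> bool" where
  "is_graph n E \<longleftrightarrow> (\<forall>e\<in>E. \<exists>x y. e = {x, y} \<and> x \<noteq> y \<and> x \<in> {1..n} \<and> y \<in> {1..n})"

definition degree :: "graph \<Rightarrow> nat \<Rightarrow> nat" where
  "degree E i = card {j. {i, j} \<in> E}"

definition deg_seq :: "nat \<Rightarrow> graph \<Rightarrow> nat list" where
  "deg_seq n E = map (degree E) [1..<n+1]"

definition adj :: "graph \<Rightarrow> nat \<Rightarrow> nat \<Rightarrow> bool" where
  "adj E x y \<longleftrightarrow> {x, y} \<in> E"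

definition connected_in :: "graph \<Rightarrow> nat \<Rightarrow> nat \<Rightarrow> bool" where
  "connected_in E x y \<longleftrightarrow> (adj E)\<^sup>*\<^sup>* x y"

definition cycle_edges :: "nat list \<Rightarrow> nat set set" where
  "cycle_edges vs = {{vs ! i, vs ! ((i + 1) mod length vs)} | i. i < length vs}"

definition cycles :: "graph \<Rightarrow> nat set set set" where
  "cycles E = {cycle_edges vs | vs. distinct vs \<and> length vs \<ge> 3 \<and>
      (\<forall>i < length vs. {vs ! i, vs ! ((i + 1) mod length vs)} \<in> E)}"

definition pseudoforest :: "nat \<Rightarrow> graph \<Rightarrow> bool" where
  "pseudoforest n E \<longleftrightarrow> is_graph n E \<and>
     (\<forall>C1\<in>cycles E. \<forall>C2\<in>cycles E.
        (\<exists>x y. x \<in> \<Union>C1 \<and> y \<in> \<Union>C2 \<and> connected_in E x y) \<longrightarrow> C1 = C2)"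

definition Pset :: "nat list \<Rightarrow> graph set" where
  "Pset s = {E. pseudoforest (length s) E \<and> deg_seq (length s) E = s}"

text \<open>A 2-switch is given by the matrix (a b; c d), encoded as (a,b,c,d).\<close>
definition interchangeable :: "graph \<Rightarrow> nat \<times> nat \<times> nat \<times> nat \<Rightarrow> bool" where
  "interchangeable E A = (case A of (a, b, c, d) \<Rightarrow>
     {a, b} \<in> E \<and> {c, d} \<in> E \<and> {a, b} \<inter> {c, d} = {} \<and> {a, c} \<notin> E \<and> {b, d} \<notin> E)"

definition two_switch :: "nat \<times> nat \<times> nat \<times> nat \<Rightarrow> graph \<Rightarrow> graph" where
  "two_switch A E = (case A of (a, b, c, d) \<Rightarrow>
     (if interchangeable E A then (E - {{a, b}, {c, d}}) \<union> {{a, c}, {b, d}} else E))"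

definition p_switch :: "nat \<Rightarrow> graph \<Rightarrow> nat \<times> nat \<times> nat \<times> nat \<Rightarrow> bool" where
  "p_switch n E A \<longleftrightarrow> pseudoforest n E \<and> interchangeable E A \<and> pseudoforest n (two_switch A E)"

end

theory Submission
  imports Defs "HOL-Library.Transitive_Closure_Table"
begin
definition nbrs :: "graph \<Rightarrow> nat \<Rightarrow> nat set" where "nbrs E v = {j. {v,j} \<in> E}"

lemma degree_nbrs: "degree E v = card (nbrs E v)" by (simp add: degree_def nbrs_def)

definition wfg :: "graph \<Rightarrow> bool" where "wfg E \<longleftrightarrow> (\<forall>e\<in>E. \<exists>x y. e = {x,y} \<and> x \<noteq> y)"

lemma is_graph_finite: "is_graph n E \<Longrightarrow> finite E"
proof -
  assume "is_graph n E"
  then have "E \<subseteq> Pow {1..n}" unfolding is_graph_def by auto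
  then show ?thesis by (meson finite_Pow_iff finite_atLeastAtMost finite_subset)
qed

lemma is_graph_wfg: "is_graph n E \<Longrightarrow> wfg E"
  unfolding is_graph_def wfg_def by blast

lemma is_graph_vert: "is_graph n E \<Longrightarrow> {x,y} \<in> E \<Longrightarrow> x \<in> {1..n} \<and> y \<in> {1..n}"
  unfolding is_graph_def by (metis doubleton_eq_iff)

lemma wfg_edge: "wfg E \<Longrightarrow> {x,y} \<in> E \<Longrightarrow> x \<noteq> y"
proof -
  assume "wfg E" "{x,y} \<in> E"
  then obtain a b where ab: "{x,y} = {a,b}" "a \<noteq> b" unfolding wfg_def by blast
  show "x \<noteq> y"
  proof
    assume "x = y"
    then have "a \<in> {x}" "b \<in> {x}" using ab(1) by blast+
    then show False using ab(2) by blast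
  qed
qed

lemma finite_nbrs: "finite E \<Longrightarrow> finite (nbrs E v)"
proof -
  assume f: "finite E"
  have "inj_on (\<lambda>j. {v,j}) (nbrs E v)" by (auto simp: inj_on_def doubleton_eq_iff)
  moreover have "(\<lambda>j. {v,j}) ` nbrs E v \<subseteq> E" by (auto simp: nbrs_def)
  ultimately show ?thesis using f by (meson finite_imageD finite_subset)
qed

lemma nbrs_sym: "j \<in> nbrs E v \<longleftrightarrow> v \<in> nbrs E j"
  by (simp add: nbrs_def insert_commute)

lemma nbrs_irrefl: "wfg E \<Longrightarrow> v \<notin> nbrs E v"
  using wfg_edge[of E v v] by (auto simp: nbrs_def)

lemma adj_sym: "adj E x y = adj E y x"
  by (simp add: adj_def insert_commute)

lemma conn_sym: "connected_in E x y \<Longrightarrow> connected_in E y x"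
  unfolding connected_in_def
proof (induction rule: rtranclp_induct)
  case base then show ?case by simp
next
  case (step y z) then show ?case
    by (metis adj_sym converse_rtranclp_into_rtranclp)
qed

lemma conn_refl: "connected_in E x x" by (simp add: connected_in_def)

lemma conn_trans: "connected_in E x y \<Longrightarrow> connected_in E y z \<Longrightarrow> connected_in E x z"
  unfolding connected_in_def by simp

lemma conn_edge: "{x,y} \<in> E \<Longrightarrow> connected_in E x y"
  unfolding connected_in_def adj_def by auto

lemma conn_mono: "F \<subseteq> E \<Longrightarrow> connected_in F x y \<Longrightarrow> connected_in E x y"
  unfolding connected_in_def
proof -
  assume s: "F \<subseteq> E" and h: "(adj F)\<^sup>*\<^sup>* x y"
  from h show "(adj E)\<^sup>*\<^sup>* x y"
    by (induction rule: rtranclp_induct) (use s in \<open>auto simp: adj_def intro: rtranclp.rtrancl_into_rtrancl\<close>)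
qed

lemma conn_insert:
  assumes "connected_in (insert {u,v} F) a b"
  shows "connected_in F a b \<or> (connected_in F a u \<and> connected_in F v b) \<or> (connected_in F a v \<and> connected_in F u b)"
proof -
  have "(adj (insert {u,v} F))\<^sup>*\<^sup>* a b" using assms by (simp add: connected_in_def)
  then show ?thesis
  proof (induction rule: rtranclp_induct)
    case base then show ?case by (simp add: conn_refl)
  next
    case (step y z)
    from step.hyps(2) have "adj F y z \<or> {y,z} = {u,v}" by (auto simp: adj_def)
    then show ?case
    proof
      assume "adj F y z"
      then have yz: "connected_in F y z" by (simp add: connected_in_def)
      from step.IH show ?thesis
      proof (elim disjE conjE)
        assume "connected_in F a y" then show ?thesis using yz conn_trans by blast
      next
        assume "connected_in F a u" "connected_in F v y" then show ?thesis using yz conn_trans by blast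
      next
        assume "connected_in F a v" "connected_in F u y" then show ?thesis using yz conn_trans by blast
      qed
    next
      assume "{y,z} = {u,v}"
      then have "(y = u \<and> z = v) \<or> (y = v \<and> z = u)" by (simp add: doubleton_eq_iff)
      then show ?thesis
      proof (elim disjE conjE)
        assume yz: "y = u" "z = v"
        from step.IH show ?thesis
        proof (elim disjE conjE)
          assume "connected_in F a y" then show ?thesis using yz conn_refl by blast
        next
          assume "connected_in F a u" "connected_in F v y" then show ?thesis using yz conn_refl by blast
        next
          assume "connected_in F a v" "connected_in F u y" then show ?thesis using yz by blast
        qed
      next
        assume yz: "y = v" "z = u"
        from step.IH show ?thesis
        proof (elim disjE conjE)
          assume "connected_in F a y" then show ?thesis using yz conn_refl by blast
        next
          assume "connected_in F a u" "connected_in F v y" then show ?thesis using yz by blast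
        next
          assume "connected_in F a v" "connected_in F u y" then show ?thesis using yz conn_refl by blast
        qed
      qed
    qed
  qed
qed

lemma mod_succ: "Suc (m mod k) mod k = Suc m mod k"
  by (simp add: mod_Suc_eq)

lemma mod_lt3: "3 \<le> k \<Longrightarrow> m mod k < (k::nat)"
  by (rule mod_less_divisor) simp

lemma mod_lt1: "1 \<le> k \<Longrightarrow> m mod k < (k::nat)"
  by (rule mod_less_divisor) simp

definition iscyc :: "graph \<Rightarrow> nat list \<Rightarrow> bool" where
  "iscyc E vs \<longleftrightarrow> distinct vs \<and> length vs \<ge> 3 \<and>
      (\<forall>i < length vs. {vs ! i, vs ! ((i + 1) mod length vs)} \<in> E)"

lemma cycles_iff: "C \<in> cycles E \<longleftrightarrow> (\<exists>vs. iscyc E vs \<and> C = cycle_edges vs)"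
  unfolding cycles_def iscyc_def by (simp add: conj_ac)

lemma cycle_edges_img: "cycle_edges vs = (\<lambda>i. {vs ! i, vs ! ((i + 1) mod length vs)}) ` {..<length vs}"
proof -
  have "cycle_edges vs = {{vs ! i, vs ! ((i + 1) mod length vs)} | i. i \<in> {..<length vs}}"
    unfolding cycle_edges_def by simp
  also have "\<dots> = (\<lambda>i. {vs ! i, vs ! ((i + 1) mod length vs)}) ` {..<length vs}"
    by (rule Setcompr_eq_image)
  finally show ?thesis .
qed

lemma cycle_edgesE:
  assumes "e \<in> cycle_edges vs"
  obtains i where "i < length vs" "e = {vs ! i, vs ! ((i + 1) mod length vs)}"
  using assms unfolding cycle_edges_img by blast

lemma cycle_edgesI:
  "i < length vs \<Longrightarrow> {vs ! i, vs ! ((i + 1) mod length vs)} \<in> cycle_edges vs"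
  unfolding cycle_edges_img by blast

lemma cyc_sub: "iscyc E vs \<Longrightarrow> cycle_edges vs \<subseteq> E"
  unfolding iscyc_def by (auto elim!: cycle_edgesE)

lemma cycles_sub: "C \<in> cycles E \<Longrightarrow> C \<subseteq> E"
  unfolding cycles_iff using cyc_sub by auto

lemma cyc_union: assumes c: "iscyc E vs" shows "\<Union>(cycle_edges vs) = set vs"
proof
  have k: "length vs \<ge> 3" using c by (simp add: iscyc_def)
  show "\<Union>(cycle_edges vs) \<subseteq> set vs"
  proof
    fix z assume "z \<in> \<Union>(cycle_edges vs)"
    then obtain e where "e \<in> cycle_edges vs" "z \<in> e" by blast
    then obtain i where i: "i < length vs" "z \<in> {vs ! i, vs ! ((i + 1) mod length vs)}"
      by (auto elim: cycle_edgesE)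
    have "(i + 1) mod length vs < length vs" using mod_lt3[OF k] .
    then show "z \<in> set vs" using i nth_mem by auto
  qed
  show "set vs \<subseteq> \<Union>(cycle_edges vs)"
  proof
    fix z assume "z \<in> set vs"
    then obtain i where "i < length vs" "vs ! i = z" by (meson in_set_conv_nth)
    then show "z \<in> \<Union>(cycle_edges vs)" using cycle_edgesI by blast
  qed
qed

lemma cyc_mono: "E \<subseteq> E' \<Longrightarrow> iscyc E vs \<Longrightarrow> iscyc E' vs"
  unfolding iscyc_def by auto

lemma cycles_mono: assumes "E \<subseteq> E'" shows "cycles E \<subseteq> cycles E'"
proof
  fix C assume "C \<in> cycles E"
  then obtain vs where "iscyc E vs" "C = cycle_edges vs" by (auto simp: cycles_iff)
  then show "C \<in> cycles E'" using cyc_mono[OF assms] by (auto simp: cycles_iff)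
qed

lemma reach_cyc:
  assumes k: "length vs \<ge> 1" and R: "\<And>i. i < length vs \<Longrightarrow> R (vs ! i) (vs ! ((i + 1) mod length vs))"
    and a: "a \<in> set vs" and b: "b \<in> set vs"
  shows "R\<^sup>*\<^sup>* a b"
proof -
  let ?k = "length vs"
  have main: "R\<^sup>*\<^sup>* (vs ! i) (vs ! ((i + m) mod ?k))" if i: "i < ?k" for i m
  proof (induction m)
    case 0 then show ?case using i by simp
  next
    case (Suc m)
    have "(i + m) mod ?k < ?k" using k by (simp add: mod_lt1)
    then have "R (vs ! ((i + m) mod ?k)) (vs ! (((i + m) mod ?k + 1) mod ?k))" using R by blast
    moreover have "((i + m) mod ?k + 1) mod ?k = (i + Suc m) mod ?k" by (simp add: mod_Suc_eq)
    ultimately show ?case using Suc by (metis rtranclp.rtrancl_into_rtrancl)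
  qed
  obtain i where i: "i < ?k" "vs ! i = a" using a by (meson in_set_conv_nth)
  obtain j where j: "j < ?k" "vs ! j = b" using b by (meson in_set_conv_nth)
  have "(i + (j + ?k - i)) mod ?k = j" using i j by simp
  then show ?thesis using main[OF i(1), of "j + ?k - i"] i j by simp
qed

lemma cyc_conn: assumes c: "iscyc E vs" and a: "a \<in> set vs" and b: "b \<in> set vs"
  shows "connected_in E a b"
proof -
  have k: "1 \<le> length vs" using c unfolding iscyc_def by linarith
  have "\<And>i. i < length vs \<Longrightarrow> adj E (vs ! i) (vs ! ((i + 1) mod length vs))"
    using c unfolding iscyc_def adj_def by blast
  from reach_cyc[of vs "adj E", OF k this a b] show ?thesis unfolding connected_in_def .
qed

lemma mod_two_cyc:
  assumes k: "(k::nat) \<ge> 3" and i: "i < k" and "j < k" and ji: "j = (i + 1) mod k" and ij: "i = (j + 1) mod k"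
  shows False
proof (cases "i + 1 < k")
  case True
  then have "(i + 1) mod k = i + 1" by simp
  then have j: "j = i + 1" using ji by simp
  show ?thesis
  proof (cases "i + 2 < k")
    case True
    then have "j + 1 < k" using j by simp
    then have "(j + 1) mod k = j + 1" by simp
    then have "(j + 1) mod k = i + 2" using j by simp
    then show ?thesis using ij by linarith
  next
    case False
    then have k2: "i + 2 = k" using \<open>i + 1 < k\<close> by linarith
    then have "j + 1 = k" using j by linarith
    then have "(j + 1) mod k = 0" by simp
    then have "i = 0" using ij by linarith
    then show ?thesis using k2 k by linarith
  qed
next
  case False
  then have k1: "i + 1 = k" using i by linarith
  then have "j = 0" using ji by simp
  then have "(j + 1) mod k = 1" using k by simp
  then have "i = 1" using ij by linarith
  then show ?thesis using k1 k by linarith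
qed

lemma cedge_inj:
  assumes c: "iscyc E vs" and i: "i < length vs" and j: "j < length vs"
    and eq: "{vs ! i, vs ! ((i + 1) mod length vs)} = {vs ! j, vs ! ((j + 1) mod length vs)}"
  shows "i = j"
proof -
  let ?k = "length vs"
  have d: "distinct vs" and k: "?k \<ge> 3" using c by (auto simp: iscyc_def)
  have i1: "(i + 1) mod ?k < ?k" and j1: "(j + 1) mod ?k < ?k" using k by (auto simp: mod_lt3)
  from eq have "(vs ! i = vs ! j \<and> vs ! ((i + 1) mod ?k) = vs ! ((j + 1) mod ?k)) \<or>
     (vs ! i = vs ! ((j + 1) mod ?k) \<and> vs ! ((i + 1) mod ?k) = vs ! j)"
    by (simp only: doubleton_eq_iff)
  then show ?thesis
  proof
    assume "vs ! i = vs ! j \<and> vs ! ((i + 1) mod ?k) = vs ! ((j + 1) mod ?k)"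
    then show ?thesis using nth_eq_iff_index_eq[OF d i j] by blast
  next
    assume h: "vs ! i = vs ! ((j + 1) mod ?k) \<and> vs ! ((i + 1) mod ?k) = vs ! j"
    then have a: "i = (j + 1) mod ?k" using nth_eq_iff_index_eq[OF d i j1] by blast
    from h have b: "(i + 1) mod ?k = j" using nth_eq_iff_index_eq[OF d i1 j] by blast
    show ?thesis using mod_two_cyc[OF k i j b[symmetric] a] by simp
  qed
qed

lemma card_cycle_edges: assumes c: "iscyc E vs" shows "card (cycle_edges vs) = length vs"
proof -
  have "inj_on (\<lambda>i. {vs ! i, vs ! ((i + 1) mod length vs)}) {..<length vs}"
    unfolding inj_on_def using cedge_inj[OF c] by blast
  then show ?thesis by (simp add: card_image cycle_edges_img)
qed

definition orient :: "graph \<Rightarrow> (nat set \<Rightarrow> nat) \<Rightarrow> bool" where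
  "orient E f \<longleftrightarrow> inj_on f E \<and> (\<forall>e\<in>E. f e \<in> e)"

definition outr :: "graph \<Rightarrow> (nat set \<Rightarrow> nat) \<Rightarrow> nat \<Rightarrow> nat \<Rightarrow> bool" where
  "outr E f p q \<longleftrightarrow> {p,q} \<in> E \<and> f {p,q} = p"

definition pfc :: "graph \<Rightarrow> bool" where
  "pfc E \<longleftrightarrow> (\<forall>C1\<in>cycles E. \<forall>C2\<in>cycles E.
        (\<exists>x y. x \<in> \<Union>C1 \<and> y \<in> \<Union>C2 \<and> connected_in E x y) \<longrightarrow> C1 = C2)"

definition cyclefree :: "graph \<Rightarrow> nat \<Rightarrow> bool" where
  "cyclefree E r \<longleftrightarrow> (\<forall>C\<in>cycles E. \<forall>z\<in>\<Union>C. \<not> connected_in E r z)"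

lemma pseudoforest_pfc: "pseudoforest n E \<longleftrightarrow> is_graph n E \<and> pfc E"
  unfolding pseudoforest_def pfc_def by simp

lemma outr_fun:
  assumes o: "orient E f" and a: "outr E f p q" and b: "outr E f p q'"
  shows "q = q'"
proof -
  have "{p,q} \<in> E" "{p,q'} \<in> E" "f {p,q} = f {p,q'}" using a b by (auto simp: outr_def)
  then have "{p,q} = {p,q'}" using o unfolding orient_def inj_on_def by blast
  then show ?thesis by (auto simp: doubleton_eq_iff)
qed

lemma cyc_bij:
  assumes o: "orient E f" and c: "iscyc E vs"
  shows "f ` cycle_edges vs = set vs"
proof -
  have sub: "f ` cycle_edges vs \<subseteq> set vs"
  proof
    fix z assume "z \<in> f ` cycle_edges vs"
    then obtain e where e: "e \<in> cycle_edges vs" "z = f e" by blast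
    have "e \<in> E" using e cyc_sub[OF c] by blast
    then have "z \<in> e" using o e unfolding orient_def by blast
    then show "z \<in> set vs" using e cyc_union[OF c] by blast
  qed
  have inj: "inj_on f (cycle_edges vs)"
    using o cyc_sub[OF c] unfolding orient_def by (meson inj_on_subset)
  have "card (f ` cycle_edges vs) = card (cycle_edges vs)" using inj by (rule card_image)
  also have "\<dots> = length vs" by (rule card_cycle_edges[OF c])
  also have "\<dots> = card (set vs)" using c unfolding iscyc_def by (simp add: distinct_card)
  finally show ?thesis using sub by (simp add: card_subset_eq)
qed

lemma cyc_in:
  assumes o: "orient E f" and c: "iscyc E vs" and e: "e \<in> E" and fe: "f e \<in> set vs"
  shows "e \<in> cycle_edges vs"
proof -
  obtain e' where e': "e' \<in> cycle_edges vs" "f e' = f e" using fe cyc_bij[OF o c] by (metis imageE)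
  have "e' \<in> E" using e' cyc_sub[OF c] by blast
  then have "e' = e" using o e e' unfolding orient_def inj_on_def by blast
  then show ?thesis using e' by simp
qed

lemma cyc_outclosed:
  assumes o: "orient E f" and c: "iscyc E vs" and pq: "outr E f p q" and p: "p \<in> set vs"
  shows "q \<in> set vs"
proof -
  have "{p,q} \<in> E" "f {p,q} = p" using pq by (auto simp: outr_def)
  then have "{p,q} \<in> cycle_edges vs" using cyc_in[OF o c] p by simp
  then show ?thesis using cyc_union[OF c] by blast
qed

lemma cyc_outclosed_star:
  assumes o: "orient E f" and c: "iscyc E vs" and ab: "(outr E f)\<^sup>*\<^sup>* a b" and a: "a \<in> set vs"
  shows "b \<in> set vs"
  using ab
proof (induction rule: rtranclp_induct)
  case base then show ?case using a .
next
  case (step y z) then show ?case using cyc_outclosed[OF o c] by blast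
qed

lemma conn_to_cycle:
  assumes o: "orient E f" and c: "iscyc E vs" and x: "x \<in> set vs" and xz: "connected_in E x z"
  shows "\<exists>w\<in>set vs. (outr E f)\<^sup>*\<^sup>* z w"
proof -
  have "(adj E)\<^sup>*\<^sup>* x z" using xz by (simp add: connected_in_def)
  then show ?thesis
  proof (induction rule: rtranclp_induct)
    case base then show ?case using x by blast
  next
    case (step z z')
    then obtain w where w: "w \<in> set vs" "(outr E f)\<^sup>*\<^sup>* z w" by blast
    have ed: "{z,z'} \<in> E" using step.hyps(2) by (simp add: adj_def)
    then have "f {z,z'} \<in> {z,z'}" using o unfolding orient_def by blast
    then show ?case
    proof
      assume "f {z,z'} = z"
      then have zz: "outr E f z z'" using ed by (simp add: outr_def)
      from w(2) show ?thesis
      proof (cases rule: converse_rtranclpE)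
        case base
        then have "z' \<in> set vs" using cyc_outclosed[OF o c zz] w(1) by simp
        then show ?thesis by blast
      next
        case (step y)
        then have "y = z'" using outr_fun[OF o] zz by blast
        then show ?thesis using step w(1) by blast
      qed
    next
      assume "f {z,z'} \<in> {z'}"
      then have "outr E f z' z" using ed by (simp add: outr_def insert_commute)
      then show ?thesis using w by (meson converse_rtranclp_into_rtranclp)
    qed
  qed
qed

lemma rtranclp_flip: "R\<^sup>*\<^sup>* a b \<Longrightarrow> (\<lambda>x y. R y x)\<^sup>*\<^sup>* b a"
proof (induction rule: rtranclp_induct)
  case base then show ?case by simp
next
  case (step y z) then show ?case by (meson converse_rtranclp_into_rtranclp)
qed

lemma pred_idx: assumes k: "(k::nat) \<ge> 3" and i: "i < k" shows "(i + 1) mod k \<noteq> i"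
proof (cases "i + 1 < k")
  case True then show ?thesis by simp
next
  case False
  then have "i + 1 = k" using i by simp
  then have "(i + 1) mod k = 0" by simp
  then show ?thesis using \<open>i + 1 = k\<close> k by simp
qed

lemma cyc_consistent:
  assumes o: "orient E f" and c: "iscyc E vs"
  shows "(\<forall>i < length vs. outr E f (vs ! i) (vs ! ((i + 1) mod length vs))) \<or>
         (\<forall>i < length vs. outr E f (vs ! ((i + 1) mod length vs)) (vs ! i))"
proof -
  let ?k = "length vs"
  define ed where "ed i = {vs ! i, vs ! ((i + 1) mod ?k)}" for i
  have k: "?k \<ge> 3" using c by (simp add: iscyc_def)
  have edE: "ed i \<in> E" if "i < ?k" for i using c that unfolding iscyc_def ed_def by blast
  have fin: "f (ed i) \<in> ed i" if "i < ?k" for i using o edE[OF that] unfolding orient_def by blast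
  define fwd where "fwd i \<longleftrightarrow> f (ed i) = vs ! ((i + 1) mod ?k)" for i
  have stp: "fwd ((i + 1) mod ?k)" if i: "i < ?k" and fi: "fwd i" for i
  proof (rule ccontr)
    let ?j = "(i + 1) mod ?k"
    assume nf: "\<not> fwd ?j"
    have j: "?j < ?k" using mod_lt3[OF k] .
    have "f (ed ?j) = vs ! ?j" using fin[OF j] nf unfolding fwd_def ed_def by auto
    then have "f (ed ?j) = f (ed i)" using fi unfolding fwd_def by simp
    then have "ed ?j = ed i" using o edE[OF j] edE[OF i] unfolding orient_def inj_on_def by blast
    then have "?j = i" using cedge_inj[OF c j i] unfolding ed_def by blast
    then show False using pred_idx[OF k i] by simp
  qed
  have iter: "fwd ((i + m) mod ?k)" if i: "i < ?k" and fi: "fwd i" for i m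
  proof (induction m)
    case 0 then show ?case using i fi by simp
  next
    case (Suc m)
    have "(i + m) mod ?k < ?k" using mod_lt3[OF k] .
    from stp[OF this Suc] show ?case by (simp add: mod_Suc_eq)
  qed
  show ?thesis
  proof (cases "\<exists>i < ?k. fwd i")
    case True
    then obtain i where i: "i < ?k" "fwd i" by blast
    have "outr E f (vs ! ((j + 1) mod ?k)) (vs ! j)" if j: "j < ?k" for j
    proof -
      have "(i + (j + ?k - i)) mod ?k = j" using i j by simp
      then have "fwd j" using iter[OF i, of "j + ?k - i"] by simp
      then show ?thesis using edE[OF j] unfolding fwd_def outr_def ed_def by (simp add: insert_commute)
    qed
    then show ?thesis by blast
  next
    case False
    have "outr E f (vs ! j) (vs ! ((j + 1) mod ?k))" if j: "j < ?k" for j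
    proof -
      have "f (ed j) = vs ! j" using fin[OF j] False j unfolding fwd_def ed_def by auto
      then show ?thesis using edE[OF j] unfolding outr_def ed_def by simp
    qed
    then show ?thesis by blast
  qed
qed

lemma cyc_allpairs:
  assumes o: "orient E f" and c: "iscyc E vs" and a: "a \<in> set vs" and b: "b \<in> set vs"
  shows "(outr E f)\<^sup>*\<^sup>* a b"
proof -
  have k: "1 \<le> length vs" using c unfolding iscyc_def by linarith
  from cyc_consistent[OF o c] show ?thesis
  proof
    assume "\<forall>i < length vs. outr E f (vs ! i) (vs ! ((i + 1) mod length vs))"
    then show ?thesis using reach_cyc[of vs "outr E f", OF k _ a b] by blast
  next
    assume h: "\<forall>i < length vs. outr E f (vs ! ((i + 1) mod length vs)) (vs ! i)"
    have "(\<lambda>x y. outr E f y x)\<^sup>*\<^sup>* b a" using reach_cyc[of vs "\<lambda>x y. outr E f y x", OF k _ b a] h by blast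
    from rtranclp_flip[OF this] show ?thesis by simp
  qed
qed

lemma orient_pfc:
  assumes o: "orient E f"
  shows "pfc E"
  unfolding pfc_def
proof (intro ballI impI)
  fix C1 C2 assume C1: "C1 \<in> cycles E" and C2: "C2 \<in> cycles E"
    and "\<exists>x y. x \<in> \<Union>C1 \<and> y \<in> \<Union>C2 \<and> connected_in E x y"
  then obtain x y where xy: "x \<in> \<Union>C1" "y \<in> \<Union>C2" "connected_in E x y" by blast
  obtain vs1 where v1: "iscyc E vs1" "C1 = cycle_edges vs1" using C1 by (auto simp: cycles_iff)
  obtain vs2 where v2: "iscyc E vs2" "C2 = cycle_edges vs2" using C2 by (auto simp: cycles_iff)
  have x: "x \<in> set vs1" using xy(1) v1 cyc_union by blast
  have y: "y \<in> set vs2" using xy(2) v2 cyc_union by blast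
  obtain w where w: "w \<in> set vs1" "(outr E f)\<^sup>*\<^sup>* y w" using conn_to_cycle[OF o v1(1) x xy(3)] by blast
  have w2: "w \<in> set vs2" using cyc_outclosed_star[OF o v2(1) w(2) y] .
  have s12: "set vs1 \<subseteq> set vs2"
  proof
    fix a assume "a \<in> set vs1"
    then have "(outr E f)\<^sup>*\<^sup>* w a" using cyc_allpairs[OF o v1(1) w(1)] by blast
    then show "a \<in> set vs2" using cyc_outclosed_star[OF o v2(1) _ w2] by blast
  qed
  have s21: "set vs2 \<subseteq> set vs1"
  proof
    fix a assume "a \<in> set vs2"
    then have "(outr E f)\<^sup>*\<^sup>* w a" using cyc_allpairs[OF o v2(1) w2] by blast
    then show "a \<in> set vs1" using cyc_outclosed_star[OF o v1(1) _ w(1)] by blast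
  qed
  have fe: "f e \<in> set vs1" if "e \<in> C1" for e
  proof -
    have "e \<in> E" using that v1 cyc_sub by blast
    then have "f e \<in> e" using o unfolding orient_def by blast
    then show ?thesis using that v1 cyc_union by blast
  qed
  have fe2: "f e \<in> set vs2" if "e \<in> C2" for e
  proof -
    have "e \<in> E" using that v2 cyc_sub by blast
    then have "f e \<in> e" using o unfolding orient_def by blast
    then show ?thesis using that v2 cyc_union by blast
  qed
  show "C1 = C2"
  proof
    show "C1 \<subseteq> C2"
    proof
      fix e assume e: "e \<in> C1"
      then have "e \<in> E" using v1 cyc_sub by blast
      then show "e \<in> C2" using cyc_in[OF o v2(1)] fe[OF e] s12 v2(2) by blast
    qed
    show "C2 \<subseteq> C1"
    proof
      fix e assume e: "e \<in> C2"
      then have "e \<in> E" using v2 cyc_sub by blast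
      then show "e \<in> C1" using cyc_in[OF o v1(1)] fe2[OF e] s21 v1(2) by blast
    qed
  qed
qed

lemma free_cyclefree:
  assumes o: "orient E f" and fr: "\<forall>e\<in>E. f e \<noteq> r"
  shows "cyclefree E r"
  unfolding cyclefree_def
proof (intro ballI notI)
  fix C z assume C: "C \<in> cycles E" and z: "z \<in> \<Union>C" and rz: "connected_in E r z"
  obtain vs where v: "iscyc E vs" "C = cycle_edges vs" using C by (auto simp: cycles_iff)
  have zs: "z \<in> set vs" using z v cyc_union by blast
  obtain w where w: "w \<in> set vs" "(outr E f)\<^sup>*\<^sup>* r w"
    using conn_to_cycle[OF o v(1) zs conn_sym[OF rz]] by blast
  from w(2) show False
  proof (cases rule: converse_rtranclpE)
    case base
    then have "r \<in> f ` cycle_edges vs" using w(1) cyc_bij[OF o v(1)] by simp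
    then obtain e where "e \<in> cycle_edges vs" "f e = r" by blast
    then show False using fr cyc_sub[OF v(1)] by blast
  next
    case (step y)
    then show False using fr unfolding outr_def by blast
  qed
qed

lemma orient_pf: "is_graph n E \<Longrightarrow> orient E f \<Longrightarrow> pseudoforest n E"
  using orient_pfc pseudoforest_pfc by blast

lemma path_cycle:
  assumes e: "{u,v} \<in> E" and uv: "u \<noteq> v" and conn: "connected_in (E - {{u,v}}) u v"
  shows "\<exists>C\<in>cycles E. {u,v} \<in> C \<and> u \<in> \<Union>C"
proof -
  let ?F = "E - {{u,v}}"
  obtain xs where "rtrancl_path (adj ?F) u xs v"
    using conn unfolding connected_in_def rtranclp_eq_rtrancl_path by blast
  then obtain ys where p: "rtrancl_path (adj ?F) u ys v" and d: "distinct (u # ys)"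
    using rtrancl_path_distinct by metis
  have ne: "ys \<noteq> []"
  proof
    assume "ys = []"
    then have "u = v" using p by (auto elim: rtrancl_path.cases)
    with uv show False by simp
  qed
  have lst: "last ys = v" using rtrancl_path_last[OF p ne] .
  have l2: "length ys \<ge> 2"
  proof (rule ccontr)
    assume nl: "\<not> length ys \<ge> 2"
    have "length ys \<noteq> 0" using ne by simp
    then have l1: "length ys = 1" using nl by linarith
    then obtain y where "ys = [y]" by (auto simp: length_Suc_conv)
    then have ys0: "ys = [ys ! 0]" by simp
    then have y: "ys ! 0 = v" using lst by (metis last.simps)
    have "adj ?F ((u # ys) ! 0) (ys ! 0)" using rtrancl_path_nth[OF p] l1 by simp
    then have "{u, v} \<in> ?F" using y by (simp add: adj_def)
    then show False by simp
  qed
  define vs where "vs = u # ys"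
  have kv: "length vs = length ys + 1" by (simp add: vs_def)
  have lastv: "vs ! length ys = v" using ne lst by (simp add: vs_def last_conv_nth nth_Cons')
  have c: "iscyc E vs"
    unfolding iscyc_def
  proof (intro conjI allI impI)
    show "distinct vs" using d by (simp add: vs_def)
    show "3 \<le> length vs" using l2 kv by simp
    fix i assume i: "i < length vs"
    show "{vs ! i, vs ! ((i + 1) mod length vs)} \<in> E"
    proof (cases "i < length ys")
      case True
      then have m: "(i + 1) mod length vs = i + 1" using kv by simp
      have "adj ?F ((u # ys) ! i) (ys ! i)" using rtrancl_path_nth[OF p True] .
      then show ?thesis using m by (simp add: vs_def adj_def)
    next
      case False
      then have ii: "i = length ys" using i kv by simp
      then have m: "(i + 1) mod length vs = 0" using kv by simp
      show ?thesis using m ii lastv e by (simp add: vs_def insert_commute)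
    qed
  qed
  have "{vs ! length ys, vs ! ((length ys + 1) mod length vs)} \<in> cycle_edges vs"
    using cycle_edgesI[of "length ys" vs] kv by simp
  then have ein: "{u,v} \<in> cycle_edges vs" using lastv kv by (simp add: vs_def insert_commute)
  have "u \<in> \<Union>(cycle_edges vs)" using cyc_union[OF c] by (simp add: vs_def)
  moreover have "cycle_edges vs \<in> cycles E" using c by (auto simp: cycles_iff)
  ultimately show ?thesis using ein by blast
qed

lemma pfc_mono: assumes s: "F \<subseteq> E" and p: "pfc E" shows "pfc F"
  unfolding pfc_def
proof (intro ballI impI)
  fix C1 C2 assume "C1 \<in> cycles F" "C2 \<in> cycles F" "\<exists>x y. x \<in> \<Union>C1 \<and> y \<in> \<Union>C2 \<and> connected_in F x y"
  moreover have "cycles F \<subseteq> cycles E" using cycles_mono[OF s] .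
  ultimately show "C1 = C2" using p conn_mono[OF s] unfolding pfc_def by blast
qed

lemma cyclefree_mono: assumes s: "F \<subseteq> E" and c: "cyclefree E r" shows "cyclefree F r"
  using c cycles_mono[OF s] conn_mono[OF s] unfolding cyclefree_def by blast

lemma wfg_mono: "F \<subseteq> E \<Longrightarrow> wfg E \<Longrightarrow> wfg F"
  unfolding wfg_def by blast

lemma key_endpoint:
  assumes nf: "{u,v} \<notin> F" and uv: "u \<noteq> v" and p: "pfc (insert {u,v} F)"
    and R1: "\<forall>r\<in>R. cyclefree (insert {u,v} F) r"
    and R2: "\<forall>r1\<in>R. \<forall>r2\<in>R. connected_in (insert {u,v} F) r1 r2 \<longrightarrow> r1 = r2"
  shows "\<exists>p\<in>{u,v}. cyclefree F p \<and> (\<forall>r\<in>R. \<not> connected_in F r p)"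
proof -
  let ?E = "insert {u,v} F"
  have sub: "F \<subseteq> ?E" by blast
  have cE: "C \<in> cycles ?E" if "C \<in> cycles F" for C using that cycles_mono[OF sub] by blast
  have cnE: "connected_in ?E a b" if "connected_in F a b" for a b using conn_mono[OF sub that] .
  have eE: "connected_in ?E u v" by (rule conn_edge) simp
  show ?thesis
  proof (cases "connected_in F u v")
    case True
    have "?E - {{u,v}} = F" using nf by blast
    then obtain C0 where C0: "C0 \<in> cycles ?E" "{u,v} \<in> C0" "u \<in> \<Union>C0"
      using path_cycle[of u v ?E] uv True by auto
    have cfu: "cyclefree F u"
      unfolding cyclefree_def
    proof (intro ballI notI)
      fix C z assume C: "C \<in> cycles F" and z: "z \<in> \<Union>C" and uz: "connected_in F u z"
      have "C0 = C" using p C0 cE[OF C] z cnE[OF uz] unfolding pfc_def by blast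
      then have "{u,v} \<in> F" using C0(2) cycles_sub[OF C] by blast
      then show False using nf by simp
    qed
    have "\<not> connected_in F r u" if r: "r \<in> R" for r
    proof
      assume "connected_in F r u"
      then have "connected_in ?E r u" by (rule cnE)
      then show False using R1 r C0 unfolding cyclefree_def by blast
    qed
    then show ?thesis using cfu by blast
  next
    case False
    have claim3: "cyclefree F u \<or> cyclefree F v"
    proof (rule ccontr)
      assume "\<not> (cyclefree F u \<or> cyclefree F v)"
      then obtain Cu za Cv zb where a: "Cu \<in> cycles F" "za \<in> \<Union>Cu" "connected_in F u za"
        and b: "Cv \<in> cycles F" "zb \<in> \<Union>Cv" "connected_in F v zb"
        unfolding cyclefree_def by blast
      have "connected_in ?E za zb"
        using conn_trans[OF conn_trans[OF conn_sym[OF cnE[OF a(3)]] eE] cnE[OF b(3)]] .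
      then have "Cu = Cv" using p cE[OF a(1)] cE[OF b(1)] a(2) b(2) unfolding pfc_def by blast
      then have zb: "zb \<in> \<Union>Cu" using b(2) by simp
      obtain vs where vs: "iscyc F vs" "Cu = cycle_edges vs" using a(1) by (auto simp: cycles_iff)
      have "connected_in F za zb" using cyc_conn[OF vs(1)] a(2) zb vs(2) cyc_union[OF vs(1)] by blast
      then have "connected_in F u v" using a(3) b(3) conn_trans conn_sym by blast
      then show False using False by simp
    qed
    show ?thesis
    proof (cases "\<exists>r\<in>R. connected_in F r u")
      case True
      then obtain r where r: "r \<in> R" "connected_in F r u" by blast
      have rv: "connected_in ?E r v" using conn_trans[OF cnE[OF r(2)] eE] .
      have cfv: "cyclefree F v"
        unfolding cyclefree_def
      proof (intro ballI notI)
        fix C z assume C: "C \<in> cycles F" and z: "z \<in> \<Union>C" and vz: "connected_in F v z"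
        have "connected_in ?E r z" using conn_trans[OF rv cnE[OF vz]] .
        then show False using R1 r(1) cE[OF C] z unfolding cyclefree_def by blast
      qed
      have "\<not> connected_in F r' v" if r': "r' \<in> R" for r'
      proof
        assume h: "connected_in F r' v"
        have "connected_in ?E r r'" using conn_trans[OF rv conn_sym[OF cnE[OF h]]] .
        then have "r = r'" using R2 r(1) r' by blast
        then have "connected_in F u v" using r(2) h conn_trans conn_sym by blast
        then show False using False by simp
      qed
      then show ?thesis using cfv by blast
    next
      case nu: False
      show ?thesis
      proof (cases "\<exists>r\<in>R. connected_in F r v")
        case True
        then obtain r where r: "r \<in> R" "connected_in F r v" by blast
        have ru: "connected_in ?E r u" using conn_trans[OF cnE[OF r(2)] conn_sym[OF eE]] .
        have cfu: "cyclefree F u"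
          unfolding cyclefree_def
        proof (intro ballI notI)
          fix C z assume C: "C \<in> cycles F" and z: "z \<in> \<Union>C" and uz: "connected_in F u z"
          have "connected_in ?E r z" using conn_trans[OF ru cnE[OF uz]] .
          then show False using R1 r(1) cE[OF C] z unfolding cyclefree_def by blast
        qed
        then show ?thesis using nu by blast
      next
        case nv: False
        show ?thesis using claim3 nu nv by blast
      qed
    qed
  qed
qed

lemma orient_exists:
  assumes "finite E"
  shows "wfg E \<Longrightarrow> pfc E \<Longrightarrow> (\<forall>r\<in>R. cyclefree E r) \<Longrightarrow>
    (\<forall>r1\<in>R. \<forall>r2\<in>R. connected_in E r1 r2 \<longrightarrow> r1 = r2) \<Longrightarrow> \<exists>f. orient E f \<and> (\<forall>e\<in>E. f e \<notin> R)"
  using assms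
proof (induction E arbitrary: R rule: finite_induct)
  case empty
  then show ?case by (simp add: orient_def)
next
  case (insert e F)
  obtain u v where e: "e = {u,v}" "u \<noteq> v" using insert.prems(1) unfolding wfg_def by blast
  have sub: "F \<subseteq> insert e F" by blast
  obtain p where p: "p \<in> {u,v}" "cyclefree F p" "\<forall>r\<in>R. \<not> connected_in F r p"
    using key_endpoint[of u v F R] insert.hyps(2) insert.prems e by blast
  have pR: "p \<notin> R" using p(3) conn_refl by blast
  have "\<exists>f. orient F f \<and> (\<forall>e\<in>F. f e \<notin> insert p R)"
  proof (rule insert.IH)
    show "wfg F" using wfg_mono[OF sub insert.prems(1)] .
    show "pfc F" using pfc_mono[OF sub insert.prems(2)] .
    show "\<forall>r\<in>insert p R. cyclefree F r" using p(2) cyclefree_mono[OF sub] insert.prems(3) by blast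
    show "\<forall>r1\<in>insert p R. \<forall>r2\<in>insert p R. connected_in F r1 r2 \<longrightarrow> r1 = r2"
      using p(3) insert.prems(4) conn_mono[OF sub] conn_sym by blast
  qed
  then obtain f where f: "orient F f" "\<forall>e\<in>F. f e \<notin> insert p R" by blast
  define g where "g = f(e := p)"
  have gF: "g x = f x" if "x \<in> F" for x using that insert.hyps(2) by (auto simp: g_def)
  have "inj_on g (insert e F)"
  proof -
    have "inj_on g F" using f(1) gF unfolding orient_def inj_on_def by metis
    moreover have "g e \<notin> g ` (F - {e})" using f(2) gF by (auto simp: g_def)
    ultimately show ?thesis by simp
  qed
  moreover have "\<forall>x\<in>insert e F. g x \<in> x" using f(1) gF p(1) e unfolding orient_def by (auto simp: g_def)
  moreover have "\<forall>x\<in>insert e F. g x \<notin> R" using f(2) gF pR by (auto simp: g_def)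
  ultimately show ?case unfolding orient_def by blast
qed

lemma pf_orient: "pseudoforest n E \<Longrightarrow> \<exists>f. orient E f"
  using orient_exists[of E "{}"] is_graph_finite is_graph_wfg pseudoforest_pfc by blast

lemma pf_root: "pseudoforest n E \<Longrightarrow> cyclefree E r \<Longrightarrow> \<exists>f. orient E f \<and> (\<forall>e\<in>E. f e \<noteq> r)"
  using orient_exists[of E "{r}"] is_graph_finite is_graph_wfg pseudoforest_pfc by blast

lemma orient_add:
  assumes o: "orient K f" and nk: "{a,b} \<notin> K" and fr: "\<forall>e\<in>K. f e \<noteq> a"
  shows "orient (insert {a,b} K) (f({a,b} := a))"
proof -
  let ?g = "f({a,b} := a)"
  have gK: "?g x = f x" if "x \<in> K" for x using that nk by auto
  have "inj_on ?g K" using o gK unfolding orient_def inj_on_def by metis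
  moreover have "?g {a,b} \<notin> ?g ` (K - {{a,b}})" using fr gK by auto
  ultimately have "inj_on ?g (insert {a,b} K)" by simp
  moreover have "\<forall>x\<in>insert {a,b} K. ?g x \<in> x" using o gK unfolding orient_def by auto
  ultimately show ?thesis unfolding orient_def by blast
qed

lemma edge_at_cyc:
  assumes c: "iscyc E vs" and fin: "finite E" and deg: "card (nbrs E z) \<le> 2"
    and z: "z \<in> set vs" and zq: "{z,q} \<in> E"
  shows "{z,q} \<in> cycle_edges vs"
proof -
  let ?k = "length vs"
  have k: "?k \<ge> 3" using c by (simp add: iscyc_def)
  obtain i where i: "i < ?k" "vs ! i = z" using z by (meson in_set_conv_nth)
  define pr where "pr = (if i = 0 then ?k - 1 else i - 1)"
  have prall: "pr < ?k \<and> (pr + 1) mod ?k = i \<and> pr \<noteq> i"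
  proof (cases "i = 0")
    case True
    then have "pr = ?k - 1" by (simp add: pr_def)
    moreover have "?k - 1 + 1 = ?k" using k by linarith
    ultimately show ?thesis using True k by auto
  next
    case False
    then have "pr = i - 1" by (simp add: pr_def)
    moreover have "i - 1 + 1 = i" using False by linarith
    ultimately show ?thesis using False i by auto
  qed
  have pr1: "pr < ?k" and pr2: "(pr + 1) mod ?k = i" and pr3: "pr \<noteq> i" using prall by auto
  define a where "a = vs ! ((i + 1) mod ?k)"
  define b where "b = vs ! pr"
  have ea: "{z,a} \<in> cycle_edges vs" using cycle_edgesI[OF i(1)] i(2) by (simp add: a_def)
  have eb: "{b,z} \<in> cycle_edges vs" using cycle_edgesI[OF pr1] pr2 i(2) by (simp add: b_def)
  have ab: "a \<noteq> b"
  proof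
    assume "a = b"
    then have "{vs ! i, vs ! ((i + 1) mod ?k)} = {vs ! pr, vs ! ((pr + 1) mod ?k)}"
      using i(2) pr2 by (simp add: a_def b_def insert_commute)
    then have "i = pr" using cedge_inj[OF c i(1) pr1] by blast
    then show False using pr3 by simp
  qed
  have "{a,b} \<subseteq> nbrs E z"
    using ea eb cyc_sub[OF c] by (auto simp: nbrs_def insert_commute)
  moreover have "card {a,b} = 2" using ab by simp
  ultimately have "{a,b} = nbrs E z"
    using deg finite_nbrs[OF fin] by (metis card_mono card_subset_eq le_antisym)
  moreover have "q \<in> nbrs E z" using zq by (simp add: nbrs_def)
  ultimately have "q = a \<or> q = b" by blast
  then show ?thesis using ea eb by (auto simp: insert_commute)
qed

lemma maxdeg2_half:
  assumes fin: "finite E" and deg: "\<forall>z. card (nbrs E z) \<le> 2"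
    and c1: "iscyc E vs1" and c2: "iscyc E vs2" and x: "x \<in> set vs1" and y: "y \<in> set vs2"
    and xy: "connected_in E x y"
  shows "cycle_edges vs2 \<subseteq> cycle_edges vs1"
proof -
  have cl: "b \<in> set vs1" if "connected_in E x b" for b
  proof -
    have "(adj E)\<^sup>*\<^sup>* x b" using that by (simp add: connected_in_def)
    then show ?thesis
    proof (induction rule: rtranclp_induct)
      case base then show ?case using x .
    next
      case (step z z')
      have "{z,z'} \<in> E" using step.hyps(2) by (simp add: adj_def)
      then have "{z,z'} \<in> cycle_edges vs1" using edge_at_cyc[OF c1 fin] deg step.IH by blast
      then show ?case using cyc_union[OF c1] by blast
    qed
  qed
  show ?thesis
  proof
    fix e assume e: "e \<in> cycle_edges vs2"
    then obtain j where j: "j < length vs2" "e = {vs2 ! j, vs2 ! ((j + 1) mod length vs2)}"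
      by (auto elim: cycle_edgesE)
    have m: "vs2 ! j \<in> set vs2" using j(1) by simp
    have "connected_in E x (vs2 ! j)" using conn_trans[OF xy cyc_conn[OF c2 y m]] .
    then have "vs2 ! j \<in> set vs1" by (rule cl)
    moreover have "e \<in> E" using e cyc_sub[OF c2] by blast
    ultimately show "e \<in> cycle_edges vs1" using edge_at_cyc[OF c1 fin] deg j(2) by blast
  qed
qed

lemma maxdeg2_pfc:
  assumes fin: "finite E" and deg: "\<forall>z. card (nbrs E z) \<le> 2"
  shows "pfc E"
  unfolding pfc_def
proof (intro ballI impI)
  fix C1 C2 assume C1: "C1 \<in> cycles E" and C2: "C2 \<in> cycles E"
    and "\<exists>x y. x \<in> \<Union>C1 \<and> y \<in> \<Union>C2 \<and> connected_in E x y"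
  then obtain x y where xy: "x \<in> \<Union>C1" "y \<in> \<Union>C2" "connected_in E x y" by blast
  obtain vs1 where v1: "iscyc E vs1" "C1 = cycle_edges vs1" using C1 by (auto simp: cycles_iff)
  obtain vs2 where v2: "iscyc E vs2" "C2 = cycle_edges vs2" using C2 by (auto simp: cycles_iff)
  have x: "x \<in> set vs1" using xy(1) v1 cyc_union by blast
  have y: "y \<in> set vs2" using xy(2) v2 cyc_union by blast
  have "C2 \<subseteq> C1" using maxdeg2_half[OF fin deg v1(1) v2(1) x y xy(3)] v1 v2 by simp
  moreover have "C1 \<subseteq> C2" using maxdeg2_half[OF fin deg v2(1) v1(1) y x conn_sym[OF xy(3)]] v1 v2 by simp
  ultimately show "C1 = C2" by blast
qed

lemma interch_unfold:
  "interchangeable G (a,b,c,d) \<longleftrightarrow> {a,b} \<in> G \<and> {c,d} \<in> G \<and> {a,b} \<inter> {c,d} = {} \<and> {a,c} \<notin> G \<and> {b,d} \<notin> G"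
  by (simp add: interchangeable_def)

lemma interch_distinct:
  assumes "interchangeable G (a,b,c,d)" "wfg G"
  shows "a \<noteq> b" "c \<noteq> d" "a \<noteq> c" "a \<noteq> d" "b \<noteq> c" "b \<noteq> d"
  using assms wfg_edge unfolding interch_unfold by blast+

lemma sw_eq:
  assumes "interchangeable G (a,b,c,d)"
  shows "two_switch (a,b,c,d) G = G - {{a,b},{c,d}} \<union> {{a,c},{b,d}}"
  using assms by (simp add: two_switch_def)

definition swg :: "graph \<Rightarrow> nat \<Rightarrow> nat \<Rightarrow> nat \<Rightarrow> nat \<Rightarrow> graph" where
  "swg G a b c d = G - {{a,b},{c,d}} \<union> {{a,c},{b,d}}"

lemma swg_perm1: "swg G a b c d = swg G b a d c"
  unfolding swg_def by (simp add: insert_commute)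
lemma swg_perm2: "swg G a b c d = swg G c d a b"
  unfolding swg_def by (simp add: insert_commute)

lemma doubleton_a:
  assumes "a \<noteq> b" "a \<noteq> c" "a \<noteq> d"
  shows "{a,j} = {a,b} \<longleftrightarrow> j = b" "{a,j} \<noteq> {c,d}" "{a,j} = {a,c} \<longleftrightarrow> j = c" "{a,j} \<noteq> {b,d}"
  using assms by (auto simp: doubleton_eq_iff)

lemma nbrs_swg_a:
  assumes "a \<noteq> b" "a \<noteq> c" "a \<noteq> d"
  shows "nbrs (swg G a b c d) a = insert c (nbrs G a - {b})"
proof -
  have "j \<in> nbrs (swg G a b c d) a \<longleftrightarrow> j \<in> insert c (nbrs G a - {b})" for j
    using doubleton_a[OF assms, of j] unfolding nbrs_def swg_def by auto
  then show ?thesis by blast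
qed

lemma nbrs_swg_other:
  assumes "z \<notin> {a,b,c,d}"
  shows "nbrs (swg G a b c d) z = nbrs G z"
proof -
  have "{z,j} \<noteq> {a,b}" "{z,j} \<noteq> {c,d}" "{z,j} \<noteq> {a,c}" "{z,j} \<noteq> {b,d}" for j
    using assms by (auto simp: doubleton_eq_iff)
  then show ?thesis unfolding nbrs_def swg_def by auto
qed

lemma card_swap1:
  assumes "finite N" "b \<in> N" "c \<notin> N"
  shows "card (insert c (N - {b})) = card N"
  using assms by (simp add: card_Diff_singleton) (metis Suc_pred card_gt_0_iff empty_iff)

lemma deg_swg:
  assumes i: "interchangeable G (a,b,c,d)" and w: "wfg G" and f: "finite G"
  shows "card (nbrs (swg G a b c d) z) = card (nbrs G z)"
proof -
  note ds = interch_distinct[OF i w]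
  have e: "{a,b} \<in> G" "{c,d} \<in> G" "{a,c} \<notin> G" "{b,d} \<notin> G" using i unfolding interch_unfold by auto
  have fin: "finite (nbrs G y)" for y using finite_nbrs[OF f] .
  consider "z = a" | "z = b" | "z = c" | "z = d" | "z \<notin> {a,b,c,d}" by blast
  then show ?thesis
  proof cases
    case 1
    have "nbrs (swg G a b c d) a = insert c (nbrs G a - {b})" using nbrs_swg_a ds by blast
    moreover have "b \<in> nbrs G a" "c \<notin> nbrs G a" using e by (auto simp: nbrs_def)
    ultimately show ?thesis using 1 card_swap1[OF fin[of a], of b c] by metis
  next
    case 2
    have "nbrs (swg G a b c d) b = insert d (nbrs G b - {a})"
      using nbrs_swg_a[of b a d c G] ds swg_perm1[of G a b c d] by auto
    moreover have "a \<in> nbrs G b" "d \<notin> nbrs G b" using e by (auto simp: nbrs_def insert_commute)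
    ultimately show ?thesis using 2 card_swap1[OF fin[of b], of a d] by metis
  next
    case 3
    have "nbrs (swg G a b c d) c = insert a (nbrs G c - {d})"
      using nbrs_swg_a[of c d a b G] ds swg_perm2[of G a b c d] by (auto simp: swg_def insert_commute)
    moreover have "d \<in> nbrs G c" "a \<notin> nbrs G c" using e by (auto simp: nbrs_def insert_commute)
    ultimately show ?thesis using 3 card_swap1[OF fin[of c], of d a] by metis
  next
    case 4
    have "swg G a b c d = swg G d c b a" unfolding swg_def by (auto simp: insert_commute)
    then have "nbrs (swg G a b c d) d = insert b (nbrs G d - {c})"
      using nbrs_swg_a[of d c b a G] ds by auto
    moreover have "c \<in> nbrs G d" "b \<notin> nbrs G d" using e by (auto simp: nbrs_def insert_commute)
    ultimately show ?thesis using 4 card_swap1[OF fin[of d], of c b] by metis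
  next
    case 5
    then show ?thesis using nbrs_swg_other by simp
  qed
qed

lemma p_switch_graph: "p_switch n G A \<Longrightarrow> is_graph n G"
  unfolding p_switch_def pseudoforest_def by simp

lemma deg_switch:
  assumes "p_switch n G A"
  shows "degree (two_switch A G) z = degree G z"
proof -
  obtain a b c d where A: "A = (a,b,c,d)" by (cases A) auto
  have i: "interchangeable G (a,b,c,d)" using assms A by (simp add: p_switch_def)
  have g: "is_graph n G" using p_switch_graph[OF assms] .
  show ?thesis using deg_swg[OF i is_graph_wfg[OF g] is_graph_finite[OF g]] sw_eq[OF i] A
    by (simp add: degree_nbrs swg_def)
qed

lemma card_swg:
  assumes i: "interchangeable G (a,b,c,d)" and w: "wfg G" and f: "finite G"
  shows "card (swg G a b c d) = card G"
proof -
  note ds = interch_distinct[OF i w]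
  have e: "{a,b} \<in> G" "{c,d} \<in> G" "{a,c} \<notin> G" "{b,d} \<notin> G" using i unfolding interch_unfold by auto
  have n1: "{a,b} \<noteq> {c,d}" "{a,c} \<noteq> {b,d}" using ds by (auto simp: doubleton_eq_iff)
  have "card (G - {{a,b},{c,d}}) = card G - 2" using e n1 f by (simp add: card_Diff_subset)
  moreover have "{a,c} \<notin> G - {{a,b},{c,d}}" "{b,d} \<notin> G - {{a,b},{c,d}}" using e by auto
  moreover have "card G \<ge> 2"
  proof -
    have "{{a,b},{c,d}} \<subseteq> G" using e by simp
    then have "card {{a,b},{c,d}} \<le> card G" using f by (simp add: card_mono)
    then show ?thesis using n1 by simp
  qed
  ultimately show ?thesis unfolding swg_def using n1 f by (simp add: insert_commute)
qed

lemma card_switch: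
  assumes "p_switch n G A"
  shows "card (two_switch A G) = card G"
proof -
  obtain a b c d where A: "A = (a,b,c,d)" by (cases A) auto
  have i: "interchangeable G (a,b,c,d)" using assms A by (simp add: p_switch_def)
  have g: "is_graph n G" using p_switch_graph[OF assms] .
  show ?thesis using card_swg[OF i is_graph_wfg[OF g] is_graph_finite[OF g]] sw_eq[OF i] A
    by (simp add: swg_def)
qed

lemma switch_inverse:
  assumes p: "p_switch n G (a,b,c,d)"
  shows "p_switch n (two_switch (a,b,c,d) G) (a,c,b,d) \<and> two_switch (a,c,b,d) (two_switch (a,b,c,d) G) = G"
proof -
  have i: "interchangeable G (a,b,c,d)" using p by (simp add: p_switch_def)
  have g: "is_graph n G" using p_switch_graph[OF p] .
  note ds = interch_distinct[OF i is_graph_wfg[OF g]]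
  have e: "{a,b} \<in> G" "{c,d} \<in> G" "{a,c} \<notin> G" "{b,d} \<notin> G" using i unfolding interch_unfold by auto
  let ?G' = "two_switch (a,b,c,d) G"
  have G': "?G' = G - {{a,b},{c,d}} \<union> {{a,c},{b,d}}" using sw_eq[OF i] .
  have n: "{a,b} \<noteq> {a,c}" "{a,b} \<noteq> {b,d}" "{c,d} \<noteq> {a,c}" "{c,d} \<noteq> {b,d}"
    using ds by (auto simp: doubleton_eq_iff)
  have i2: "interchangeable ?G' (a,c,b,d)"
    unfolding interch_unfold G' using ds n by auto
  have "two_switch (a,c,b,d) ?G' = ?G' - {{a,c},{b,d}} \<union> {{a,b},{c,d}}" using sw_eq[OF i2] .
  also have "\<dots> = G" unfolding G' using e by auto
  finally have bk: "two_switch (a,c,b,d) ?G' = G" .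
  have "pseudoforest n ?G'" using p by (simp add: p_switch_def)
  moreover have "pseudoforest n G" using p by (simp add: p_switch_def)
  ultimately show ?thesis using i2 bk by (simp add: p_switch_def)
qed

inductive preach :: "nat \<Rightarrow> graph \<Rightarrow> graph \<Rightarrow> bool" for n where
  prefl: "preach n G G"
| pstep: "p_switch n G A \<Longrightarrow> preach n (two_switch A G) H \<Longrightarrow> preach n G H"

lemma preach_trans: "preach n G K \<Longrightarrow> preach n K H \<Longrightarrow> preach n G H"
  by (induction rule: preach.induct) (auto intro: preach.intros)

lemma preach_one: "p_switch n G A \<Longrightarrow> preach n G (two_switch A G)"
  by (auto intro: preach.intros)

lemma preach_sym: "preach n G H \<Longrightarrow> preach n H G"
proof (induction rule: preach.induct)
  case (prefl G) then show ?case by (rule preach.prefl)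
next
  case (pstep G A H)
  obtain a b c d where A: "A = (a,b,c,d)" by (cases A) auto
  have "p_switch n (two_switch A G) (a,c,b,d) \<and> two_switch (a,c,b,d) (two_switch A G) = G"
    using switch_inverse pstep.hyps(1) A by simp
  then have "preach n (two_switch A G) G" using preach_one by metis
  then show ?case using pstep.IH preach_trans by blast
qed

lemma preach_deg: "preach n G H \<Longrightarrow> degree H z = degree G z"
  by (induction rule: preach.induct) (auto simp: deg_switch)

lemma preach_card: "preach n G H \<Longrightarrow> card H = card G"
  by (induction rule: preach.induct) (auto simp: card_switch)

lemma preach_pf: "preach n G H \<Longrightarrow> pseudoforest n G \<Longrightarrow> pseudoforest n H"
  by (induction rule: preach.induct) (auto simp: p_switch_def)

lemma switch_iso:
  assumes p: "p_switch n G A" and v: "\<forall>e\<in>G. v \<notin> e"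
  shows "\<forall>e\<in>two_switch A G. v \<notin> e"
proof -
  obtain a b c d where A: "A = (a,b,c,d)" by (cases A) auto
  have i: "interchangeable G (a,b,c,d)" using p A by (simp add: p_switch_def)
  have e: "{a,b} \<in> G" "{c,d} \<in> G" using i unfolding interch_unfold by auto
  have "v \<noteq> a" "v \<noteq> b" "v \<noteq> c" "v \<noteq> d" using e v by auto
  then show ?thesis using sw_eq[OF i] A v by auto
qed

lemma preach_iso: "preach n G H \<Longrightarrow> \<forall>e\<in>G. v \<notin> e \<Longrightarrow> \<forall>e\<in>H. v \<notin> e"
  by (induction rule: preach.induct) (auto dest: switch_iso)

lemma lift_switch:
  assumes i: "interchangeable K (a,b,c,d)" and v: "\<forall>e\<in>K. v \<notin> e" and S: "\<forall>e\<in>S. v \<in> e"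
  shows "interchangeable (K \<union> S) (a,b,c,d) \<and> two_switch (a,b,c,d) (K \<union> S) = two_switch (a,b,c,d) K \<union> S"
proof -
  have e: "{a,b} \<in> K" "{c,d} \<in> K" "{a,b} \<inter> {c,d} = {}" "{a,c} \<notin> K" "{b,d} \<notin> K"
    using i unfolding interch_unfold by auto
  have nv: "v \<noteq> a" "v \<noteq> b" "v \<noteq> c" "v \<noteq> d" using e v by auto
  have ns: "{a,c} \<notin> S" "{b,d} \<notin> S" "{a,b} \<notin> S" "{c,d} \<notin> S" using S nv by auto
  have i2: "interchangeable (K \<union> S) (a,b,c,d)" unfolding interch_unfold using e ns by auto
  have "two_switch (a,b,c,d) (K \<union> S) = (K \<union> S) - {{a,b},{c,d}} \<union> {{a,c},{b,d}}" using sw_eq[OF i2] .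
  also have "\<dots> = two_switch (a,b,c,d) K \<union> S" using sw_eq[OF i] ns by auto
  finally show ?thesis using i2 by simp
qed

lemma preach_lift:
  assumes "preach n K1 K2"
  shows "\<forall>e\<in>K1. v \<notin> e \<Longrightarrow> \<forall>e\<in>S. v \<in> e \<Longrightarrow> (\<And>K. preach n K1 K \<Longrightarrow> pseudoforest n (K \<union> S))
    \<Longrightarrow> preach n (K1 \<union> S) (K2 \<union> S)"
  using assms
proof (induction rule: preach.induct)
  case (prefl G) show ?case by (rule preach.prefl)
next
  case (pstep G A H)
  obtain a b c d where A: "A = (a,b,c,d)" by (cases A) auto
  have i: "interchangeable G (a,b,c,d)" using pstep.hyps(1) A by (simp add: p_switch_def)
  note ls = lift_switch[OF i pstep.prems(1) pstep.prems(2)]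
  have IH: "preach n (two_switch A G \<union> S) (H \<union> S)"
  proof (rule pstep.IH)
    show "\<forall>e\<in>two_switch A G. v \<notin> e" using switch_iso[OF pstep.hyps(1) pstep.prems(1)] .
    show "\<forall>e\<in>S. v \<in> e" using pstep.prems(2) .
    fix K assume "preach n (two_switch A G) K"
    then have "preach n G K" using preach_trans[OF preach_one[OF pstep.hyps(1)]] by blast
    then show "pseudoforest n (K \<union> S)" using pstep.prems(3) by blast
  qed
  have "pseudoforest n (G \<union> S)" using pstep.prems(3)[OF preach.prefl] .
  moreover have "pseudoforest n (two_switch A G \<union> S)"
    using pstep.prems(3)[OF preach_one[OF pstep.hyps(1)]] .
  ultimately have "p_switch n (G \<union> S) A" using ls A by (simp add: p_switch_def)
  moreover have "two_switch A (G \<union> S) = two_switch A G \<union> S" using ls A by simp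
  ultimately show ?case using IH preach.pstep by metis
qed

lemma preach_list:
  "preach n G H \<Longrightarrow> \<exists>ts :: (nat \<times> nat \<times> nat \<times> nat) list. \<exists>Gs :: graph list.
           length Gs = length ts + 1 \<and> Gs ! 0 = G \<and> Gs ! length ts = H \<and>
           (\<forall>i < length ts. p_switch n (Gs ! i) (ts ! i) \<and>
                            Gs ! (i + 1) = two_switch (ts ! i) (Gs ! i))"
proof (induction rule: preach.induct)
  case (prefl G)
  show ?case by (rule exI[of _ "[]"], rule exI[of _ "[G]"]) simp
next
  case (pstep G A H)
  then obtain ts Gs where h: "length Gs = length ts + 1" "Gs ! 0 = two_switch A G" "Gs ! length ts = H"
    "\<forall>i < length ts. p_switch n (Gs ! i) (ts ! i) \<and> Gs ! (i + 1) = two_switch (ts ! i) (Gs ! i)"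
    by blast
  have "length (G # Gs) = length (A # ts) + 1" using h by simp
  moreover have "(G # Gs) ! 0 = G" by simp
  moreover have "(G # Gs) ! length (A # ts) = H" using h by simp
  moreover have "\<forall>i < length (A # ts). p_switch n ((G # Gs) ! i) ((A # ts) ! i) \<and>
      (G # Gs) ! (i + 1) = two_switch ((A # ts) ! i) ((G # Gs) ! i)"
  proof (intro allI impI)
    fix i assume i: "i < length (A # ts)"
    show "p_switch n ((G # Gs) ! i) ((A # ts) ! i) \<and>
      (G # Gs) ! (i + 1) = two_switch ((A # ts) ! i) ((G # Gs) ! i)"
    proof (cases i)
      case 0 then show ?thesis using pstep.hyps(1) h(2) by simp
    next
      case (Suc j) then show ?thesis using h(4) i by simp
    qed
  qed
  ultimately show ?case by blast
qed

lemma is_graph_sub: "F \<subseteq> G \<Longrightarrow> is_graph n G \<Longrightarrow> is_graph n F"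
  unfolding is_graph_def by blast

lemma is_graph_insert:
  "is_graph n K \<Longrightarrow> a \<in> {1..n} \<Longrightarrow> b \<in> {1..n} \<Longrightarrow> a \<noteq> b \<Longrightarrow> is_graph n (insert {a,b} K)"
  unfolding is_graph_def by blast

lemma pf_sub: "F \<subseteq> G \<Longrightarrow> pseudoforest n G \<Longrightarrow> pseudoforest n F"
  using is_graph_sub pfc_mono pseudoforest_pfc by metis

lemma orient_sub: "F \<subseteq> G \<Longrightarrow> orient G f \<Longrightarrow> orient F f"
  unfolding orient_def by (meson inj_on_subset subsetD)

lemma cyclefree_conn: "cyclefree K t \<Longrightarrow> connected_in K t x \<Longrightarrow> cyclefree K x"
  unfolding cyclefree_def using conn_trans by blast

lemma iso_conn: assumes "\<forall>e\<in>K. x \<notin> e" and "connected_in K x w" shows "w = x"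
proof -
  have "(adj K)\<^sup>*\<^sup>* x w" using assms(2) by (simp add: connected_in_def)
  then show ?thesis
  proof (cases rule: converse_rtranclpE)
    case base then show ?thesis by simp
  next
    case (step y)
    then have "{x,y} \<in> K" by (simp add: adj_def)
    then show ?thesis using assms(1) by blast
  qed
qed

lemma iso_cyclefree: assumes "\<forall>e\<in>K. x \<notin> e" shows "cyclefree K x"
  unfolding cyclefree_def
proof (intro ballI notI)
  fix C w assume C: "C \<in> cycles K" and w: "w \<in> \<Union>C" and xw: "connected_in K x w"
  have "w = x" using iso_conn[OF assms xw] .
  then show False using w cycles_sub[OF C] assms by blast
qed

lemma edge_form: assumes "wfg G" "e \<in> G" "z \<in> e" shows "\<exists>j. e = {z,j} \<and> j \<in> nbrs G z"
proof -
  obtain p q where "e = {p,q}" using assms(1,2) unfolding wfg_def by blast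
  then show ?thesis using assms(2,3) by (auto simp: nbrs_def insert_commute)
qed

lemma Ycount:
  assumes f: "finite G" and w: "wfg G" and pv: "p \<notin> nbrs G v" and xv: "x \<in> nbrs G v"
    and xp: "x \<noteq> p" and vp: "v \<noteq> p" and dg: "card (nbrs G x) \<le> card (nbrs G p)"
  shows "\<exists>y\<in>nbrs G p. y \<noteq> x \<and> y \<notin> nbrs G x"
proof (rule ccontr)
  assume "\<not> ?thesis"
  then have sub: "nbrs G p \<subseteq> insert x (nbrs G x)" by blast
  have vx: "v \<in> nbrs G x" using xv nbrs_sym by metis
  have vnp: "v \<notin> nbrs G p" using pv nbrs_sym by metis
  have pnp: "p \<notin> nbrs G p" using nbrs_irrefl[OF w] .
  have fx: "finite (nbrs G x)" using finite_nbrs[OF f] .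
  show False
  proof (cases "x \<in> nbrs G p")
    case True
    then have px: "p \<in> nbrs G x" using nbrs_sym by metis
    have s2: "nbrs G p \<subseteq> insert x (nbrs G x - {v, p})" using sub vnp pnp by blast
    have c1: "card (nbrs G p) \<le> card (insert x (nbrs G x - {v,p}))"
      using s2 fx by (simp add: card_mono)
    have c2: "card (insert x (nbrs G x - {v,p})) \<le> Suc (card (nbrs G x - {v,p}))"
      using fx by (simp add: card_insert_if)
    have c3: "card (nbrs G x - {v,p}) = card (nbrs G x) - 2"
      using vx px vp fx by (simp add: card_Diff_subset)
    have c4: "card (nbrs G x) \<ge> 2"
    proof -
      have "{v,p} \<subseteq> nbrs G x" using vx px by simp
      then have "card {v,p} \<le> card (nbrs G x)" using fx by (simp add: card_mono)
      then show ?thesis using vp by simp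
    qed
    show False using c1 c2 c3 c4 dg by linarith
  next
    case False
    have s2: "nbrs G p \<subseteq> nbrs G x - {v}" using sub vnp False by blast
    have c1: "card (nbrs G p) \<le> card (nbrs G x - {v})" using s2 fx by (simp add: card_mono)
    have c3: "card (nbrs G x - {v}) = card (nbrs G x) - 1" using vx fx by simp
    have c4: "card (nbrs G x) \<ge> 1" using vx fx card_0_eq by fastforce
    show False using c1 c3 c4 dg by linarith
  qed
qed

lemma NF1_finish:
  assumes pf: "pseudoforest n G" and lx: "nbrs G l = {x}" and ty: "{t,y} \<in> G"
    and tn: "t \<noteq> l" "t \<noteq> x" and yn: "y \<noteq> l" "y \<noteq> x" and xy: "{x,y} \<notin> G" and lt: "{l,t} \<notin> G"
    and o: "orient (G - {{l,x},{t,y}}) h" and ab: "{a,b} = {x,y}" and fr: "\<forall>e\<in>G - {{l,x},{t,y}}. h e \<noteq> a"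
  shows "p_switch n G (l,x,t,y) \<and> {l,t} \<in> two_switch (l,x,t,y) G"
proof -
  have g: "is_graph n G" using pf by (simp add: pseudoforest_pfc)
  have w: "wfg G" using is_graph_wfg[OF g] .
  have lxG: "{l,x} \<in> G" using lx by (auto simp: nbrs_def)
  have xl: "x \<noteq> l" using wfg_edge[OF w lxG] by simp
  have liso: "e = {l,x}" if "e \<in> G" "l \<in> e" for e
    using edge_form[OF w that] lx by auto
  have i: "interchangeable G (l,x,t,y)"
    unfolding interch_unfold using lxG ty tn yn xy lt by auto
  let ?K = "G - {{l,x},{t,y}}"
  have nab: "{a,b} \<notin> ?K" using ab xy by auto
  have an: "a \<noteq> l" using ab xl yn by (auto simp: doubleton_eq_iff)
  have o1: "orient (insert {a,b} ?K) (h({a,b} := a))" using orient_add[OF o nab fr] .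
  have lfree: "\<forall>e\<in>insert {a,b} ?K. (h({a,b} := a)) e \<noteq> l"
  proof
    fix e assume e: "e \<in> insert {a,b} ?K"
    show "(h({a,b} := a)) e \<noteq> l"
    proof (cases "e = {a,b}")
      case True then show ?thesis using an by simp
    next
      case False
      then have eK: "e \<in> ?K" using e by simp
      then have "h e \<in> e" using o unfolding orient_def by blast
      moreover have "l \<notin> e" using liso eK by blast
      ultimately show ?thesis using False by auto
    qed
  qed
  have nlt: "{l,t} \<notin> insert {a,b} ?K" using lt ab xl yn by (auto simp: doubleton_eq_iff)
  have o2: "orient (insert {l,t} (insert {a,b} ?K)) ((h({a,b} := a))({l,t} := l))"
    using orient_add[OF o1 nlt lfree] .
  have eq: "two_switch (l,x,t,y) G = insert {l,t} (insert {a,b} ?K)"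
    using sw_eq[OF i] ab by auto
  have vl: "l \<in> {1..n}" "x \<in> {1..n}" using is_graph_vert[OF g lxG] by auto
  have vt: "t \<in> {1..n}" "y \<in> {1..n}" using is_graph_vert[OF g ty] by auto
  have gK: "is_graph n ?K" using is_graph_sub[OF _ g] by blast
  have "is_graph n (insert {a,b} ?K)"
    using is_graph_insert[OF gK] ab vl vt yn by (auto simp: doubleton_eq_iff)
  then have "is_graph n (insert {l,t} (insert {a,b} ?K))"
    using is_graph_insert vl vt tn by metis
  then have "pseudoforest n (two_switch (l,x,t,y) G)" using orient_pf o2 eq by metis
  then show ?thesis using pf i eq by (simp add: p_switch_def)
qed

lemma NF1:
  assumes pf: "pseudoforest n G" and lx: "nbrs G l = {x}" and tl: "t \<noteq> l"
    and dm: "card (nbrs G x) \<le> card (nbrs G t)" and nlt: "{l,t} \<notin> G"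
  shows "\<exists>A. p_switch n G A \<and> {l,t} \<in> two_switch A G"
proof -
  have g: "is_graph n G" using pf by (simp add: pseudoforest_pfc)
  have w: "wfg G" using is_graph_wfg[OF g] .
  have fG: "finite G" using is_graph_finite[OF g] .
  have lxG: "{l,x} \<in> G" using lx by (auto simp: nbrs_def)
  have xl: "x \<noteq> l" using wfg_edge[OF w lxG] by simp
  have xt: "x \<noteq> t" using nlt lxG by auto
  have tnl: "t \<notin> nbrs G l" using lx xt by auto
  have lnt: "l \<notin> nbrs G t" using tnl nbrs_sym by metis
  have xinl: "x \<in> nbrs G l" using lx by simp
  obtain y0 where y0: "y0 \<in> nbrs G t" "y0 \<noteq> x" "y0 \<notin> nbrs G x"
    using Ycount[OF fG w tnl xinl xt tl[symmetric] dm] by blast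
  let ?G0 = "G - {{l,x}}"
  have pf0: "pseudoforest n ?G0" using pf_sub[OF _ pf] by blast
  obtain f where f: "orient ?G0 f" using pf_orient[OF pf0] by blast
  define Y where "Y = {y \<in> nbrs G t. y \<noteq> x \<and> y \<notin> nbrs G x}"
  have y0Y: "y0 \<in> Y" using y0 by (simp add: Y_def)
  have Yf: "y \<noteq> l" "{t,y} \<in> G" "{t,y} \<in> ?G0" "{x,y} \<notin> G" "y \<noteq> x" "y \<noteq> t"
    if y: "y \<in> Y" for y
  proof -
    have a: "y \<in> nbrs G t" "y \<noteq> x" "y \<notin> nbrs G x" using y by (auto simp: Y_def)
    have b: "{t,y} \<noteq> {l,x}" using tl xt by (auto simp: doubleton_eq_iff)
    show "y \<noteq> t" using nbrs_irrefl[OF w] a(1) by blast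
    show "y \<noteq> l" using a(1) lnt by blast
    show "{t,y} \<in> G" using a(1) by (simp add: nbrs_def)
    then show "{t,y} \<in> ?G0" using b by simp
    show "{x,y} \<notin> G" using a(3) by (simp add: nbrs_def)
    show "y \<noteq> x" using a(2) .
  qed
  show ?thesis
  proof (cases "\<exists>y\<in>Y. f {t,y} = y")
    case True
    then obtain y where y: "y \<in> Y" "f {t,y} = y" by blast
    note yf = Yf[OF y(1)]
    let ?K = "G - {{l,x},{t,y}}"
    have sub: "?K \<subseteq> ?G0" by blast
    have oK: "orient ?K f" using orient_sub[OF sub f] .
    have fr: "\<forall>e\<in>?K. f e \<noteq> y"
    proof (intro ballI notI)
      fix e assume e: "e \<in> ?K" and fe: "f e = y"
      have "e \<in> ?G0" using e by blast
      then have "e = {t,y}" using f yf y(2) fe unfolding orient_def inj_on_def by metis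
      then show False using e by blast
    qed
    have ab: "{y,x} = {x,y}" by (simp add: insert_commute)
    have "p_switch n G (l,x,t,y) \<and> {l,t} \<in> two_switch (l,x,t,y) G"
      using NF1_finish[OF pf lx _ tl xt[symmetric] _ _ _ nlt oK ab fr] yf by blast
    then show ?thesis by blast
  next
    case False
    note yf = Yf[OF y0Y]
    have ft: "f {t,y0} = t"
    proof -
      have "f {t,y0} \<in> {t,y0}" using f yf unfolding orient_def by blast
      then show ?thesis using False y0Y by auto
    qed
    let ?K = "G - {{l,x},{t,y0}}"
    have sub: "?K \<subseteq> ?G0" by blast
    have pfK: "pseudoforest n ?K" using pf_sub[OF _ pf] by blast
    have cfx: "cyclefree ?K x"
    proof (cases "\<exists>z\<in>nbrs G t. z \<noteq> y0")
      case True
      then obtain z where z: "z \<in> nbrs G t" "z \<noteq> y0" by blast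
      have zY: "z \<notin> Y"
      proof
        assume zY: "z \<in> Y"
        note zf = Yf[OF zY]
        have "f {t,z} \<in> {t,z}" using f zf unfolding orient_def by blast
        then have "f {t,z} = t" using False zY by auto
        then have "f {t,z} = f {t,y0}" using ft by simp
        then have "{t,z} = {t,y0}" using f zf yf unfolding orient_def inj_on_def by metis
        then show False using z(2) by (auto simp: doubleton_eq_iff)
      qed
      then have zx: "z = x \<or> z \<in> nbrs G x" using z(1) by (auto simp: Y_def)
      have zl: "z \<noteq> l" using z(1) lnt by blast
      have zt: "z \<noteq> t" using z(1) nbrs_irrefl[OF w] by blast
      have oK: "orient ?K f" using orient_sub[OF sub f] .
      have tfree: "\<forall>e\<in>?K. f e \<noteq> t"
      proof (intro ballI notI)
        fix e assume e: "e \<in> ?K" and fe: "f e = t"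
        have "e \<in> ?G0" using e by blast
        then have "e = {t,y0}" using f yf ft fe unfolding orient_def inj_on_def by metis
        then show False using e by blast
      qed
      have cft: "cyclefree ?K t" using free_cyclefree[OF oK tfree] .
      have tzK: "{t,z} \<in> ?K" using z zt tl xt by (auto simp: nbrs_def doubleton_eq_iff)
      have "connected_in ?K t x"
      proof (cases "z = x")
        case True then show ?thesis using conn_edge[OF tzK] by simp
      next
        case zne: False
        then have "z \<in> nbrs G x" using zx by simp
        then have "{z,x} \<in> G" by (simp add: nbrs_def insert_commute)
        then have "{z,x} \<in> ?K" using zne zl zt z(2) by (auto simp: doubleton_eq_iff)
        then show ?thesis using conn_trans[OF conn_edge[OF tzK] conn_edge] by blast
      qed
      then show ?thesis using cyclefree_conn[OF cft] by blast
    next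
      case nz: False
      then have "nbrs G t \<subseteq> {y0}" by blast
      then have "card (nbrs G t) \<le> card {y0}" by (intro card_mono) auto
      then have "card (nbrs G t) \<le> 1" by simp
      then have cx: "card (nbrs G x) \<le> 1" using dm by linarith
      have lnx: "l \<in> nbrs G x" using xinl nbrs_sym by metis
      have nx: "nbrs G x = {l}"
      proof -
        have fx: "finite (nbrs G x)" using finite_nbrs[OF fG] .
        have "card (nbrs G x) \<le> Suc 0" using cx by simp
        then have "\<forall>a\<in>nbrs G x. \<forall>b\<in>nbrs G x. a = b" using card_le_Suc0_iff_eq[OF fx] by blast
        then show ?thesis using lnx by blast
      qed
      have "\<forall>e\<in>?K. x \<notin> e"
      proof (intro ballI notI)
        fix e assume e: "e \<in> ?K" and xe: "x \<in> e"
        obtain j where "e = {x,j}" "j \<in> nbrs G x" using edge_form[OF w _ xe] e by blast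
        then have "e = {l,x}" using nx by (auto simp: insert_commute)
        then show False using e by blast
      qed
      then show ?thesis by (rule iso_cyclefree)
    qed
    obtain h where h: "orient ?K h" "\<forall>e\<in>?K. h e \<noteq> x" using pf_root[OF pfK cfx] by blast
    have ab: "{x,y0} = {x,y0}" by simp
    have "p_switch n G (l,x,t,y0) \<and> {l,t} \<in> two_switch (l,x,t,y0) G"
      using NF1_finish[OF pf lx _ tl xt[symmetric] _ _ _ nlt h(1) ab h(2)] yf by blast
    then show ?thesis by blast
  qed
qed

lemma incident_card: assumes w: "wfg G" shows "card (nbrs G z) = card {e\<in>G. z \<in> e}"
proof -
  have "(\<lambda>j. {z,j}) ` nbrs G z = {e\<in>G. z \<in> e}"
  proof
    show "(\<lambda>j. {z,j}) ` nbrs G z \<subseteq> {e\<in>G. z \<in> e}" by (auto simp: nbrs_def)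
    show "{e\<in>G. z \<in> e} \<subseteq> (\<lambda>j. {z,j}) ` nbrs G z"
    proof
      fix e assume "e \<in> {e\<in>G. z \<in> e}"
      then obtain j where "e = {z,j}" "j \<in> nbrs G z" using edge_form[OF w] by blast
      then show "e \<in> (\<lambda>j. {z,j}) ` nbrs G z" by blast
    qed
  qed
  moreover have "inj_on (\<lambda>j. {z,j}) (nbrs G z)" by (auto simp: inj_on_def doubleton_eq_iff)
  ultimately show ?thesis by (metis card_image)
qed

lemma sum_if_card: "finite A \<Longrightarrow> (\<Sum>x\<in>A. if P x then 1 else 0) = card {x\<in>A. P x}"
  by (simp add: sum.inter_filter[symmetric])

lemma sum_incident:
  assumes g: "is_graph n G"
  shows "(\<Sum>z\<in>{1..n}. card {e\<in>G. z \<in> e}) = 2 * card G"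
proof -
  have fG: "finite G" using is_graph_finite[OF g] .
  have "(\<Sum>z\<in>{1..n}. card {e\<in>G. z \<in> e}) = (\<Sum>z\<in>{1..n}. \<Sum>e\<in>G. if z \<in> e then 1 else 0)"
    using fG by (simp add: sum_if_card)
  also have "\<dots> = (\<Sum>e\<in>G. \<Sum>z\<in>{1..n}. if z \<in> e then 1 else 0)" by (rule sum.swap)
  also have "\<dots> = (\<Sum>e\<in>G. 2)"
  proof (rule sum.cong)
    fix e assume e: "e \<in> G"
    obtain a b where ab: "e = {a,b}" "a \<noteq> b" "a \<in> {1..n}" "b \<in> {1..n}" using g e unfolding is_graph_def by blast
    have "{z \<in> {1..n}. z \<in> e} = {a,b}" using ab by auto
    then show "(\<Sum>z\<in>{1..n}. if z \<in> e then 1 else 0) = (2::nat)" using ab by (simp add: sum_if_card)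
  qed simp
  finally show ?thesis by simp
qed

lemma sum_out:
  assumes g: "is_graph n G" and o: "orient G f"
  shows "(\<Sum>z\<in>{1..n}. card {e\<in>G. f e = z}) = card G"
proof -
  have fG: "finite G" using is_graph_finite[OF g] .
  have "(\<Sum>z\<in>{1..n}. card {e\<in>G. f e = z}) = (\<Sum>z\<in>{1..n}. \<Sum>e\<in>G. if f e = z then 1 else 0)"
    using fG by (simp add: sum_if_card)
  also have "\<dots> = (\<Sum>e\<in>G. \<Sum>z\<in>{1..n}. if f e = z then 1 else 0)" by (rule sum.swap)
  also have "\<dots> = (\<Sum>e\<in>G. 1)"
  proof (rule sum.cong)
    fix e assume e: "e \<in> G"
    obtain a b where ab: "e = {a,b}" "a \<in> {1..n}" "b \<in> {1..n}" using g e unfolding is_graph_def by blast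
    have "f e \<in> e" using o e unfolding orient_def by blast
    then have fV: "f e \<in> {1..n}" using ab by auto
    have "(\<Sum>z\<in>{1..n}. if f e = z then 1 else 0) = card {z \<in> {1..n}. f e = z}"
      by (rule sum_if_card) simp
    also have "{z \<in> {1..n}. f e = z} = {f e}" using fV by auto
    finally show "(\<Sum>z\<in>{1..n}. if f e = z then 1 else 0) = (1::nat)" by simp
  qed simp
  finally show ?thesis by simp
qed

lemma noleaf_deg2:
  assumes pf: "pseudoforest n G" and nl: "\<forall>z. degree G z \<noteq> 1"
  shows "degree G z \<le> 2"
proof (rule ccontr)
  assume big: "\<not> degree G z \<le> 2"
  have g: "is_graph n G" using pf by (simp add: pseudoforest_pfc)
  have w: "wfg G" using is_graph_wfg[OF g] .
  have fG: "finite G" using is_graph_finite[OF g] .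
  obtain f where o: "orient G f" using pf_orient[OF pf] by blast
  define d where "d y = card {e\<in>G. y \<in> e}" for y
  define ou where "ou y = card {e\<in>G. f e = y}" for y
  have dd: "d y = degree G y" for y using incident_card[OF w] by (simp add: d_def degree_nbrs)
  have ol: "ou y \<le> 1" for y
  proof -
    have fin: "finite {e\<in>G. f e = y}" using fG by simp
    have "\<forall>a\<in>{e\<in>G. f e = y}. \<forall>b\<in>{e\<in>G. f e = y}. a = b" using o unfolding orient_def inj_on_def by blast
    then show ?thesis using card_le_Suc0_iff_eq[OF fin] unfolding ou_def by simp
  qed
  have le: "2 * ou y \<le> d y" for y
  proof (cases "ou y = 0")
    case True then show ?thesis by simp
  next
    case False
    then have "{e\<in>G. f e = y} \<noteq> {}" unfolding ou_def by (metis card.empty)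
    then obtain e where e: "e \<in> G" "f e = y" by blast
    then have "y \<in> e" using o unfolding orient_def by blast
    then have "{e\<in>G. y \<in> e} \<noteq> {}" using e by blast
    then have "d y \<noteq> 0" unfolding d_def using fG by simp
    moreover have "d y \<noteq> 1" using nl dd by simp
    ultimately show ?thesis using ol[of y] by linarith
  qed
  have zgt: "d z \<noteq> 0" using big dd by simp
  then have "{e\<in>G. z \<in> e} \<noteq> {}" unfolding d_def by (metis card.empty)
  then obtain e where e: "e \<in> G" "z \<in> e" by blast
  obtain j where "e = {z,j}" using edge_form[OF w e] by blast
  then have zV: "z \<in> {1..n}" using is_graph_vert[OF g] e(1) by blast
  have lt: "2 * ou z < d z" using big dd ol[of z] by simp
  have "(\<Sum>y\<in>{1..n}. 2 * ou y) < (\<Sum>y\<in>{1..n}. d y)"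
    by (rule sum_strict_mono_ex1) (use le lt zV in auto)
  also have "(\<Sum>y\<in>{1..n}. d y) = 2 * card G" using sum_incident[OF g] by (simp add: d_def)
  also have "\<dots> = (\<Sum>y\<in>{1..n}. 2 * ou y)"
    using sum_out[OF g o] by (simp add: ou_def sum_distrib_left[symmetric])
  finally show False by simp
qed

lemma NF2_step:
  assumes g: "is_graph n G" and d2: "\<forall>z. degree G z \<le> 2" and nl: "\<forall>z. degree G z \<noteq> 1"
    and pv: "p \<notin> nbrs G v" and x: "x \<in> nbrs G v" and xp: "x \<noteq> p" and vp: "v \<noteq> p"
    and pd: "degree G p \<noteq> 0"
  shows "\<exists>A. p_switch n G A \<and> nbrs (two_switch A G) v = insert p (nbrs G v - {x})"
proof -
  have w: "wfg G" using is_graph_wfg[OF g] .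
  have fG: "finite G" using is_graph_finite[OF g] .
  have dp1: "degree G p \<le> 2" "degree G p \<noteq> 1" using d2 nl by blast+
  have dp: "degree G p = 2" using dp1 pd by linarith
  have "degree G x \<le> 2" using d2 by blast
  then have dx: "card (nbrs G x) \<le> card (nbrs G p)" using dp by (simp add: degree_nbrs)
  obtain y where y: "y \<in> nbrs G p" "y \<noteq> x" "y \<notin> nbrs G x" using Ycount[OF fG w pv x xp vp dx] by blast
  have yv: "y \<noteq> v" using y(1) pv nbrs_sym by metis
  have vx: "v \<noteq> x" using x nbrs_irrefl[OF w] by blast
  have e: "{v,x} \<in> G" "{p,y} \<in> G" "{v,p} \<notin> G" "{x,y} \<notin> G" using x y pv by (auto simp: nbrs_def)
  have i: "interchangeable G (v,x,p,y)" unfolding interch_unfold using e vp yv xp y(2) by auto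
  let ?G' = "two_switch (v,x,p,y) G"
  have G': "?G' = swg G v x p y" using sw_eq[OF i] by (simp add: swg_def)
  have deg': "card (nbrs ?G' z) \<le> 2" for z
    using deg_swg[OF i w fG, of z] G' d2 by (simp add: degree_nbrs)
  have vv: "v \<in> {1..n}" "x \<in> {1..n}" using is_graph_vert[OF g e(1)] by auto
  have vp': "p \<in> {1..n}" "y \<in> {1..n}" using is_graph_vert[OF g e(2)] by auto
  have gs: "is_graph n (G - {{v,x},{p,y}})" using is_graph_sub[OF _ g] by blast
  have "is_graph n (insert {v,p} (insert {x,y} (G - {{v,x},{p,y}})))"
    using is_graph_insert[OF is_graph_insert[OF gs] ] vv vp' vp y(2) by metis
  then have g': "is_graph n ?G'" using sw_eq[OF i] by (simp add: insert_commute)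
  have "pfc ?G'" using maxdeg2_pfc[OF is_graph_finite[OF g']] deg' by blast
  then have pf': "pseudoforest n ?G'" using g' by (simp add: pseudoforest_pfc)
  have "pfc G" using maxdeg2_pfc[OF fG] d2 by (simp add: degree_nbrs)
  then have pf: "pseudoforest n G" using g by (simp add: pseudoforest_pfc)
  have "p_switch n G (v,x,p,y)" using pf pf' i by (simp add: p_switch_def)
  moreover have "nbrs ?G' v = insert p (nbrs G v - {x})" using G' nbrs_swg_a vx vp yv by metis
  ultimately show ?thesis by blast
qed

lemma NF2:
  assumes "card (nbrs H v - nbrs G v) = m" and "is_graph n G" and "\<forall>z. degree G z \<le> 2"
    and "\<forall>z. degree G z \<noteq> 1" and "is_graph n H" and "\<forall>z. degree G z = degree H z"
  shows "\<exists>G1. preach n G G1 \<and> nbrs G1 v = nbrs H v"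
  using assms
proof (induction m arbitrary: G rule: less_induct)
  case (less m)
  have wH: "wfg H" using is_graph_wfg[OF less.prems(5)] .
  have fH: "finite H" using is_graph_finite[OF less.prems(5)] .
  have fG: "finite G" using is_graph_finite[OF less.prems(2)] .
  have fnG: "finite (nbrs G v)" using finite_nbrs[OF fG] .
  have fnH: "finite (nbrs H v)" using finite_nbrs[OF fH] .
  have ceq: "card (nbrs G v) = card (nbrs H v)" using less.prems(6) by (simp add: degree_nbrs)
  show ?case
  proof (cases "nbrs H v \<subseteq> nbrs G v")
    case True
    then have "nbrs H v = nbrs G v" using ceq fnG by (simp add: card_subset_eq)
    then show ?thesis using preach.prefl by metis
  next
    case False
    then obtain p where p: "p \<in> nbrs H v" "p \<notin> nbrs G v" by blast
    have "\<not> nbrs G v \<subseteq> nbrs H v"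
    proof
      assume "nbrs G v \<subseteq> nbrs H v"
      then have "nbrs G v = nbrs H v" using ceq fnH by (simp add: card_subset_eq)
      then show False using p by simp
    qed
    then obtain x where x: "x \<in> nbrs G v" "x \<notin> nbrs H v" by blast
    have vp: "v \<noteq> p" using p(1) nbrs_irrefl[OF wH] by blast
    have xp: "x \<noteq> p" using x p by blast
    have "v \<in> nbrs H p" using p(1) nbrs_sym by metis
    then have "card (nbrs H p) \<noteq> 0" using finite_nbrs[OF fH] by (metis card_0_eq empty_iff)
    then have pd: "degree G p \<noteq> 0" using less.prems(6) by (simp add: degree_nbrs)
    obtain A where A: "p_switch n G A" "nbrs (two_switch A G) v = insert p (nbrs G v - {x})"
      using NF2_step[OF less.prems(2,3,4) p(2) x(1) xp vp pd] by blast
    let ?G' = "two_switch A G"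
    have dg: "degree ?G' z = degree G z" for z using deg_switch[OF A(1)] .
    have g': "is_graph n ?G'" using A(1) unfolding p_switch_def pseudoforest_def by simp
    have eqset: "nbrs H v - nbrs ?G' v = (nbrs H v - nbrs G v) - {p}" using A(2) x(2) by auto
    have lt: "card (nbrs H v - nbrs ?G' v) < m"
    proof -
      have "finite (nbrs H v - nbrs G v)" using fnH by simp
      moreover have "p \<in> nbrs H v - nbrs G v" using p by simp
      ultimately have "card ((nbrs H v - nbrs G v) - {p}) < card (nbrs H v - nbrs G v)"
        by (meson card_Diff1_less)
      then show ?thesis using eqset less.prems(1) by simp
    qed
    have d2': "\<forall>z. degree ?G' z \<le> 2" using dg less.prems(3) by simp
    have nl': "\<forall>z. degree ?G' z \<noteq> 1" using dg less.prems(4) by simp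
    have de': "\<forall>z. degree ?G' z = degree H z" using dg less.prems(6) by simp
    obtain G1 where "preach n ?G' G1" "nbrs G1 v = nbrs H v"
      using less.IH[OF lt refl g' d2' nl' less.prems(5) de'] by blast
    then show ?thesis using preach.pstep[OF A(1)] by blast
  qed
qed

lemma deg_remove:
  assumes f: "finite E" and s: "S \<subseteq> E"
  shows "card (nbrs (E - S) z) = card (nbrs E z) - card {j. {z,j} \<in> S}"
proof -
  have "nbrs (E - S) z = nbrs E z - {j. {z,j} \<in> S}" by (auto simp: nbrs_def)
  moreover have "{j. {z,j} \<in> S} \<subseteq> nbrs E z" using s by (auto simp: nbrs_def)
  moreover have "finite (nbrs E z)" using finite_nbrs[OF f] .
  ultimately show ?thesis by (simp add: card_Diff_subset finite_subset)
qed

lemma deg_union: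
  assumes fK: "finite K" and fS: "finite S" and d: "K \<inter> S = {}"
  shows "card (nbrs (K \<union> S) z) = card (nbrs K z) + card {j. {z,j} \<in> S}"
proof -
  have "nbrs (K \<union> S) z = nbrs K z \<union> {j. {z,j} \<in> S}" by (auto simp: nbrs_def)
  moreover have "nbrs K z \<inter> {j. {z,j} \<in> S} = {}" using d by (auto simp: nbrs_def)
  moreover have "finite (nbrs K z)" using finite_nbrs[OF fK] .
  moreover have "finite {j. {z,j} \<in> S}" using finite_nbrs[OF fS] by (simp add: nbrs_def)
  ultimately show ?thesis by (simp add: card_Un_disjoint)
qed

lemma deg_zero_out: assumes "z \<notin> \<Union>G" shows "degree G z = 0"
proof -
  have "nbrs G z = {}" using assms by (auto simp: nbrs_def)
  then show ?thesis by (simp add: degree_nbrs)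
qed

lemma graph_vert_union: assumes g: "is_graph n G" and z: "z \<in> \<Union>G" shows "z \<in> {1..n}"
proof -
  obtain e where e: "e \<in> G" "z \<in> e" using z by blast
  obtain j where "e = {z,j}" using edge_form[OF is_graph_wfg[OF g] e] by blast
  then show ?thesis using is_graph_vert[OF g] e(1) by blast
qed

lemma finite_Union_graph: assumes g: "is_graph n G" shows "finite (\<Union>G)"
proof -
  have "\<Union>G \<subseteq> {1..n}" using graph_vert_union[OF g] by blast
  then show ?thesis by (rule finite_subset) simp
qed

lemma is_graph_union: "is_graph n K \<Longrightarrow> is_graph n H \<Longrightarrow> S \<subseteq> H \<Longrightarrow> is_graph n (K \<union> S)"
  unfolding is_graph_def by blast

lemma leaf_reach:
  assumes pf: "pseudoforest n K" and deg: "\<forall>z. degree K z = degree G z" and dl: "degree G l = 1"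
    and tl: "t \<noteq> l" and mx: "\<forall>z. z \<noteq> l \<longrightarrow> degree G z \<le> degree G t"
  shows "\<exists>K1. preach n K K1 \<and> {l,t} \<in> K1"
proof (cases "{l,t} \<in> K")
  case True then show ?thesis using preach.prefl by blast
next
  case False
  have g: "is_graph n K" using pf by (simp add: pseudoforest_pfc)
  have w: "wfg K" using is_graph_wfg[OF g] .
  have "card (nbrs K l) = 1" using deg dl by (simp add: degree_nbrs)
  then obtain x where x: "nbrs K l = {x}" by (metis card_1_singletonE)
  have xl: "x \<noteq> l" using x nbrs_irrefl[OF w] by blast
  have "degree G x \<le> degree G t" using mx xl by blast
  then have "card (nbrs K x) \<le> card (nbrs K t)" using deg by (simp add: degree_nbrs[symmetric])
  then obtain A where "p_switch n K A" "{l,t} \<in> two_switch A K" using NF1[OF pf x tl _ False] by blast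
  then show ?thesis using preach_one by blast
qed

lemma main:
  assumes "card G = m" "pseudoforest n G" "pseudoforest n H" "\<forall>z. degree G z = degree H z"
  shows "preach n G H"
  using assms
proof (induction m arbitrary: G H rule: less_induct)
  case (less m)
  note pfG = less.prems(2) and pfH = less.prems(3) and dGH = less.prems(4)
  have gG: "is_graph n G" using pfG by (simp add: pseudoforest_pfc)
  have gH: "is_graph n H" using pfH by (simp add: pseudoforest_pfc)
  have wG: "wfg G" using is_graph_wfg[OF gG] .
  have wH: "wfg H" using is_graph_wfg[OF gH] .
  have fG: "finite G" using is_graph_finite[OF gG] .
  have fH: "finite H" using is_graph_finite[OF gH] .
  show ?case
  proof (cases "G = {}")
    case True
    have "H = {}"
    proof (rule ccontr)
      assume "H \<noteq> {}"
      then obtain e where e: "e \<in> H" by blast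
      then obtain a b where "e = {a,b}" using wH unfolding wfg_def by blast
      then have "b \<in> nbrs H a" using e by (simp add: nbrs_def)
      then have "card (nbrs H a) \<noteq> 0" using finite_nbrs[OF fH] by auto
      moreover have "nbrs G a = {}" using True by (simp add: nbrs_def)
      moreover have "card (nbrs G a) = card (nbrs H a)" using dGH by (simp add: degree_nbrs)
      ultimately show False by simp
    qed
    then show ?thesis using True preach.prefl by simp
  next
    case Gne: False
    show ?thesis
    proof (cases "\<exists>l. degree G l = 1")
      case True
      then obtain l where dl: "degree G l = 1" by blast
      then obtain x where x: "nbrs G l = {x}" by (metis card_1_singletonE degree_nbrs)
      have xl: "x \<noteq> l" using x nbrs_irrefl[OF wG] by blast
      have "{l,x} \<in> G" using x by (auto simp: nbrs_def)
      then have xG: "x \<in> \<Union>G" by blast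
      define X where "X = \<Union>G - {l}"
      have fX: "finite X" using finite_Union_graph[OF gG] by (simp add: X_def)
      have xX: "x \<in> X" using xG xl by (simp add: X_def)
      define M where "M = Max (degree G ` X)"
      have "M \<in> degree G ` X" unfolding M_def using fX xX by (intro Max_in) auto
      then obtain t where tX: "t \<in> X" and tM: "degree G t = M" by blast
      have tmax: "degree G z \<le> degree G t" if "z \<in> X" for z
        using tM that fX unfolding M_def by simp
      have tl: "t \<noteq> l" using tX by (simp add: X_def)
      have mx: "\<forall>z. z \<noteq> l \<longrightarrow> degree G z \<le> degree G t"
      proof (intro allI impI)
        fix z assume zl: "z \<noteq> l"
        show "degree G z \<le> degree G t"
        proof (cases "z \<in> \<Union>G")
          case True then show ?thesis using tmax zl by (simp add: X_def)
        next
          case False then show ?thesis using deg_zero_out by simp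
        qed
      qed
      obtain G1 where G1: "preach n G G1" "{l,t} \<in> G1"
        using leaf_reach[OF pfG _ dl tl mx] by blast
      have dHG: "\<forall>z. degree H z = degree G z" using dGH by simp
      obtain H1 where H1: "preach n H H1" "{l,t} \<in> H1"
        using leaf_reach[OF pfH dHG dl tl mx] by blast
      have pfG1: "pseudoforest n G1" using preach_pf[OF G1(1) pfG] .
      have pfH1: "pseudoforest n H1" using preach_pf[OF H1(1) pfH] .
      have gG1: "is_graph n G1" using pfG1 by (simp add: pseudoforest_pfc)
      have gH1: "is_graph n H1" using pfH1 by (simp add: pseudoforest_pfc)
      have dG1: "degree G1 z = degree G z" for z using preach_deg[OF G1(1)] .
      have dH1: "degree H1 z = degree H z" for z using preach_deg[OF H1(1)] .
      have cG1: "card G1 = card G" using preach_card[OF G1(1)] .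
      let ?S = "{{l,t}}"
      define G2 where "G2 = G1 - ?S"
      define H2 where "H2 = H1 - ?S"
      have pfG2: "pseudoforest n G2" using pf_sub[OF _ pfG1] by (auto simp: G2_def)
      have pfH2: "pseudoforest n H2" using pf_sub[OF _ pfH1] by (auto simp: H2_def)
      have dG2H2: "\<forall>z. degree G2 z = degree H2 z"
      proof
        fix z
        have "degree G2 z = card (nbrs G1 z) - card {j. {z,j} \<in> ?S}"
          unfolding G2_def degree_nbrs using deg_remove[OF is_graph_finite[OF gG1]] G1(2) by simp
        moreover have "degree H2 z = card (nbrs H1 z) - card {j. {z,j} \<in> ?S}"
          unfolding H2_def degree_nbrs using deg_remove[OF is_graph_finite[OF gH1]] H1(2) by simp
        moreover have "card (nbrs G1 z) = card (nbrs H1 z)" using dG1 dH1 dGH by (simp add: degree_nbrs[symmetric])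
        ultimately show "degree G2 z = degree H2 z" by simp
      qed
      have "card G > 0" using Gne fG by (simp add: card_gt_0_iff)
      moreover have "card G2 = card G1 - 1" unfolding G2_def using G1(2) is_graph_finite[OF gG1] by simp
      ultimately have cG2: "card G2 < m" using cG1 less.prems(1) by simp
      have IH: "preach n G2 H2" using less.IH[OF cG2 refl pfG2 pfH2 dG2H2] .
      have nG1l: "nbrs G1 l = {t}"
      proof -
        have "card (nbrs G1 l) = 1" using dG1 dl by (simp add: degree_nbrs)
        then obtain y where y: "nbrs G1 l = {y}" by (metis card_1_singletonE)
        have "t \<in> nbrs G1 l" using G1(2) by (simp add: nbrs_def)
        then show ?thesis using y by simp
      qed
      have liso: "\<forall>e\<in>G2. l \<notin> e"
      proof (intro ballI notI)
        fix e assume e: "e \<in> G2" and le: "l \<in> e"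
        then have eG1: "e \<in> G1" by (simp add: G2_def)
        obtain j where "e = {l,j}" "j \<in> nbrs G1 l" using edge_form[OF is_graph_wfg[OF gG1] eG1 le] by blast
        then have "e = {l,t}" using nG1l by simp
        then show False using e by (simp add: G2_def)
      qed
      have vS: "\<forall>e\<in>?S. l \<in> e" by simp
      have vlt: "l \<in> {1..n}" "t \<in> {1..n}" using is_graph_vert[OF gG1 G1(2)] by auto
      have pfK: "pseudoforest n (K \<union> ?S)" if K: "preach n G2 K" for K
      proof -
        have pfK0: "pseudoforest n K" using preach_pf[OF K pfG2] .
        have gK: "is_graph n K" using pfK0 by (simp add: pseudoforest_pfc)
        have lK: "\<forall>e\<in>K. l \<notin> e" using preach_iso[OF K liso] .
        obtain f where f: "orient K f" using pf_orient[OF pfK0] by blast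
        have nK: "{l,t} \<notin> K" using lK by blast
        have fr: "\<forall>e\<in>K. f e \<noteq> l" using f lK unfolding orient_def by metis
        have o: "orient (insert {l,t} K) (f({l,t} := l))" using orient_add[OF f nK fr] .
        have "is_graph n (insert {l,t} K)" using is_graph_insert[OF gK vlt tl[symmetric]] .
        then have "pseudoforest n (insert {l,t} K)" using orient_pf o by blast
        then show ?thesis by simp
      qed
      have "preach n (G2 \<union> ?S) (H2 \<union> ?S)" using preach_lift[OF IH liso vS pfK] by blast
      moreover have "G2 \<union> ?S = G1" using G1(2) by (auto simp: G2_def)
      moreover have "H2 \<union> ?S = H1" using H1(2) by (auto simp: H2_def)
      ultimately have "preach n G1 H1" by simp
      then show ?thesis using preach_trans[OF G1(1) preach_trans[OF _ preach_sym[OF H1(1)]]] by blast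
    next
      case False
      then have nl: "\<forall>z. degree G z \<noteq> 1" by blast
      have d2: "\<forall>z. degree G z \<le> 2" using noleaf_deg2[OF pfG nl] by blast
      obtain e where eG: "e \<in> G" using Gne by blast
      then obtain v u where vu: "e = {v,u}" using wG unfolding wfg_def by blast
      have "u \<in> nbrs G v" using eG vu by (simp add: nbrs_def)
      then have "card (nbrs G v) \<noteq> 0" using finite_nbrs[OF fG] by auto
      then have dv0: "degree G v \<noteq> 0" by (simp add: degree_nbrs)
      have dv: "degree G v = 2" using dv0 d2 nl by (metis One_nat_def le_SucE le_zero_eq numeral_2_eq_2)
      obtain G1 where G1: "preach n G G1" "nbrs G1 v = nbrs H v"
        using NF2[OF refl gG d2 nl gH dGH] by blast
      have pfG1: "pseudoforest n G1" using preach_pf[OF G1(1) pfG] .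
      have gG1: "is_graph n G1" using pfG1 by (simp add: pseudoforest_pfc)
      have fG1: "finite G1" using is_graph_finite[OF gG1] .
      have dG1: "degree G1 z = degree G z" for z using preach_deg[OF G1(1)] .
      have cG1: "card G1 = card G" using preach_card[OF G1(1)] .
      define N where "N = nbrs H v"
      define S where "S = (\<lambda>j. {v,j}) ` N"
      have SG1: "S \<subseteq> G1" using G1(2) by (auto simp: S_def N_def nbrs_def)
      have SH: "S \<subseteq> H" by (auto simp: S_def N_def nbrs_def)
      have fN: "finite N" using finite_nbrs[OF fH] by (simp add: N_def)
      have fS: "finite S" using fN by (simp add: S_def)
      have cN: "card N = 2" using dv dGH by (simp add: N_def degree_nbrs)
      then have "N \<noteq> {}" by auto
      then have Sne: "S \<noteq> {}" by (simp add: S_def)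
      define G2 where "G2 = G1 - S"
      define H2 where "H2 = H - S"
      have pfG2: "pseudoforest n G2" using pf_sub[OF _ pfG1] by (auto simp: G2_def)
      have pfH2: "pseudoforest n H2" using pf_sub[OF _ pfH] by (auto simp: H2_def)
      have dG2H2: "\<forall>z. degree G2 z = degree H2 z"
      proof
        fix z
        have "degree G2 z = card (nbrs G1 z) - card {j. {z,j} \<in> S}"
          unfolding G2_def degree_nbrs using deg_remove[OF fG1 SG1] by simp
        moreover have "degree H2 z = card (nbrs H z) - card {j. {z,j} \<in> S}"
          unfolding H2_def degree_nbrs using deg_remove[OF fH SH] by simp
        moreover have "card (nbrs G1 z) = card (nbrs H z)" using dG1 dGH by (simp add: degree_nbrs[symmetric])
        ultimately show "degree G2 z = degree H2 z" by simp
      qed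
      have "card S > 0" using fS Sne by (simp add: card_gt_0_iff)
      moreover have "card G2 = card G1 - card S" unfolding G2_def using SG1 fS by (simp add: card_Diff_subset)
      moreover have "card S \<le> card G1" using SG1 fG1 by (simp add: card_mono)
      ultimately have cG2: "card G2 < m" using cG1 less.prems(1) by linarith
      have IH: "preach n G2 H2" using less.IH[OF cG2 refl pfG2 pfH2 dG2H2] .
      have viso: "\<forall>e\<in>G2. v \<notin> e"
      proof (intro ballI notI)
        fix e assume e: "e \<in> G2" and ve: "v \<in> e"
        then have eG1: "e \<in> G1" by (simp add: G2_def)
        obtain j where "e = {v,j}" "j \<in> nbrs G1 v" using edge_form[OF is_graph_wfg[OF gG1] eG1 ve] by blast
        then have "e \<in> S" using G1(2) by (simp add: S_def N_def)
        then show False using e by (simp add: G2_def)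
      qed
      have vS: "\<forall>e\<in>S. v \<in> e" by (auto simp: S_def)
      have G2S: "G2 \<union> S = G1" using SG1 by (auto simp: G2_def)
      have dis2: "G2 \<inter> S = {}" by (auto simp: G2_def)
      have pfK: "pseudoforest n (K \<union> S)" if K: "preach n G2 K" for K
      proof -
        have pfK0: "pseudoforest n K" using preach_pf[OF K pfG2] .
        have gK: "is_graph n K" using pfK0 by (simp add: pseudoforest_pfc)
        have fK: "finite K" using is_graph_finite[OF gK] .
        have vK: "\<forall>e\<in>K. v \<notin> e" using preach_iso[OF K viso] .
        have dis: "K \<inter> S = {}" using vK vS by blast
        have gKS: "is_graph n (K \<union> S)" using is_graph_union[OF gK gH SH] .
        have "card (nbrs (K \<union> S) z) \<le> 2" for z
        proof -
          have "card (nbrs (K \<union> S) z) = card (nbrs K z) + card {j. {z,j} \<in> S}"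
            using deg_union[OF fK fS dis] .
          also have "card (nbrs K z) = card (nbrs G2 z)" using preach_deg[OF K] by (simp add: degree_nbrs)
          also have "card (nbrs G2 z) + card {j. {z,j} \<in> S} = card (nbrs (G2 \<union> S) z)"
            using deg_union[OF finite_subset[OF _ fG1] fS dis2] by (simp add: G2_def)
          also have "\<dots> = degree G z" using G2S dG1 by (simp add: degree_nbrs)
          also have "\<dots> \<le> 2" using d2 by blast
          finally show ?thesis .
        qed
        then have "pfc (K \<union> S)" using maxdeg2_pfc[OF is_graph_finite[OF gKS]] by blast
        then show ?thesis using gKS by (simp add: pseudoforest_pfc)
      qed
      have "preach n (G2 \<union> S) (H2 \<union> S)" using preach_lift[OF IH viso vS pfK] by blast
      moreover have "H2 \<union> S = H" using SH by (auto simp: H2_def)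
      ultimately have "preach n G1 H" using G2S by simp
      then show ?thesis using preach_trans[OF G1(1)] by blast
    qed
  qed
qed

theorem theorem5p7:
  fixes s :: "nat list" and G H :: graph
  assumes "G \<in> Pset s" and "H \<in> Pset s"
  shows "\<exists>ts :: (nat \<times> nat \<times> nat \<times> nat) list. \<exists>Gs :: graph list.
           length Gs = length ts + 1 \<and> Gs ! 0 = G \<and> Gs ! length ts = H \<and>
           (\<forall>i < length ts. p_switch (length s) (Gs ! i) (ts ! i) \<and>
                            Gs ! (i + 1) = two_switch (ts ! i) (Gs ! i))"
proof -
  let ?n = "length s"
  have pG: "pseudoforest ?n G" "deg_seq ?n G = s" using assms(1) by (simp_all add: Pset_def)
  have pH: "pseudoforest ?n H" "deg_seq ?n H = s" using assms(2) by (simp_all add: Pset_def)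
  have gG: "is_graph ?n G" using pG(1) by (simp add: pseudoforest_pfc)
  have gH: "is_graph ?n H" using pH(1) by (simp add: pseudoforest_pfc)
  have deq: "\<forall>z. degree G z = degree H z"
  proof
    fix z
    show "degree G z = degree H z"
    proof (cases "z \<in> {1..?n}")
      case True
      have m: "map (degree G) [1..<?n+1] = map (degree H) [1..<?n+1]"
        using pG(2) pH(2) by (simp add: deg_seq_def)
      have zs: "z \<in> set [1..<?n+1]" using True by auto
      have "\<forall>x\<in>set [1..<?n+1]. degree G x = degree H x" using m by (simp only: map_eq_conv)
      then show ?thesis using zs by blast
    next
      case False
      have "z \<notin> \<Union>G" using False graph_vert_union[OF gG] by blast
      moreover have "z \<notin> \<Union>H" using False graph_vert_union[OF gH] by blast
      ultimately show ?thesis using deg_zero_out by simp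
    qed
  qed
  have "preach ?n G H" using main[OF refl pG(1) pH(1) deq] .
  then show ?thesis by (rule preach_list)
qed

end
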